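(* Let $N\ge1$, $d\ge1$, and let $U_1,\dots,U_N:\mathbb{R}^d\to\mathbb{R}$ and $U=\sum_n U_n$ satisfy: (A1) each $U_n$ is $C^2$ with $K$-Lipschitz gradient for some $K>0$; (A2) each $U_n$ is coercive and there is $C_1>0$ with $\langle x,\nabla U_n(x)\rangle\ge0$ for $\|x\|\ge C_1$; (A3) $\min_x U(x)=0$ and $\inf_x(\|\nabla U(x)\|^2-\Delta U(x))>-\infty$; (A4) the probability measures $\pi^\varepsilon$ with density proportional to $\exp(-2U(x)/\varepsilon^2)$ have a weak limit as $\varepsilon\to0$; (A5) $\liminf_{\|x\|\to\infty}\langle \nabla U(x)/\|\nabla U(x)\|, x/\|x\|\rangle\ge((4d-4)/(4d-3))^{1/2}$, $\liminf_{\|x\|\to\infty}\|\nabla U(x)\|/\|x\|>0$, $\limsup_{\|x\|\to\infty}\|\nabla U(x)\|/\|x\|<\infty$. Let $G$ be an undirected connected graph on $\{1,\dots,N\}$ with Laplacian $L$. Let $\mathbf{x}_t\in\mathbb{R}^{Nd}$ (stacking $\mathbf{x}_n(t)\in\mathbb{R}^d$) satisfy $$\mathbf{x}_{t+1}=\mathbf{x}_t-\beta_t(L\otimes I_d)\mathbf{x}_t-\alpha_t\big(\nabla\hat U(\mathbf{x}_t)+\boldsymbol{\xi}_t\big)+\gamma_t\mathbf{w}_t,$$ where $\hat U(\mathbf{x})=\sum_{n=1}^N U_n(\mathbf{x}_n)$, and with $\mathcal{F}_t$ the natural filtration generated by $\{\mathbf{x}_s\}_{s\le t}$, $\{\boldsymbol{\xi}_s,\mathbf{w}_s\}_{s\le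 t-1}$: (A6) $\{\boldsymbol{\xi}_t\}$ is $\{\mathcal{F}_{t+1}\}$-adapted, $\mathbb{E}[\boldsymbol{\xi}_t\mid\mathcal{F}_t]=0$, $\mathbb{E}[\|\boldsymbol{\xi}_t\|^2\mid\mathcal{F}_t]<B$ for some $B>0$; (A7) $\mathbf{w}_t=(\mathbf{w}_n(t))_n$ where each $\{\mathbf{w}_n(t)\}_t$ is i.i.d. standard Gaussian in $\mathbb{R}^d$, $\mathbf{w}_n(t)$ is independent of $\mathcal{F}_t$, and the sequences for different $n$ are mutually independent; (A8) for $t$ large, $\alpha_t=c_\alpha/t$, $\beta_t=c_\beta/t^{\tau_\beta}$, $\gamma_t=c_\gamma/(t^{1/2}\sqrt{\log\log t})$ with $c_\alpha,c_\beta,c_\gamma>0$, $\tau_\beta\in(0,1/2)$. Let $\bar{\mathbf{x}}(t)=\frac1N\sum_{n=1}^N\mathbf{x}_n(t)$. Then with probability 1, for every $\tau\in[0,1/2-\tau_\beta)$ and every $n=1,\dots,N$, $$\lim_{t\to\infty}t^\tau\|\mathbf{x}_n(t)-\bar{\mathbf{x}}(t)\|=0.$$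
   Context: $\otimes$ is the Kronecker product; $\|\cdot\|$ is the Euclidean norm; the initial condition $\mathbf{x}_1$ is deterministic. *)

theory Defs
  imports "HOL-Probability.Probability"
begin

definition undirected_graph :: "('n \<Rightarrow> 'n \<Rightarrow> bool) \<Rightarrow> bool" where
  "undirected_graph E \<longleftrightarrow> (\<forall>i j. E i j \<longrightarrow> E j i) \<and> (\<forall>i. \<not> E i i)"

definition connected_graph :: "('n \<Rightarrow> 'n \<Rightarrow> bool) \<Rightarrow> bool" where
  "connected_graph E \<longleftrightarrow> (\<forall>i j. (i, j) \<in> {(a, b). E a b}\<^sup>*)"

definition graph_laplacian :: "('n::finite \<Rightarrow> 'n \<Rightarrow> bool) \<Rightarrow> 'n \<Rightarrow> 'n \<Rightarrow> real" where
  "graph_laplacian E i j =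
     (if i = j then real (card {k. E i k}) else if E i j then -1 else 0)"

text \<open>(L \<otimes> I_d) applied to a stacked vector x (node blocks x $ n).\<close>
definition kron_laplacian ::
  "('n::finite \<Rightarrow> 'n \<Rightarrow> real) \<Rightarrow> real^'d^'n \<Rightarrow> real^'d^'n" where
  "kron_laplacian L x = (\<chi> n. \<Sum>m\<in>UNIV. L n m *\<^sub>R x $ m)"

definition trace_hessian :: "('a::euclidean_space \<Rightarrow> 'a \<Rightarrow>\<^sub>L 'a) \<Rightarrow> 'a \<Rightarrow> real" where
  "trace_hessian H x = (\<Sum>i\<in>Basis. inner (blinfun_apply (H x) i) i)"

definition gibbs_measure :: "('a::euclidean_space \<Rightarrow> real) \<Rightarrow> real \<Rightarrow> 'a measure" where
  "gibbs_measure U eps =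
     density lborel (\<lambda>x. ennreal (exp (- 2 * U x / eps\<^sup>2) /
        (\<integral>y. exp (- 2 * U y / eps\<^sup>2) \<partial>lborel)))"

definition weak_limit_at_zero :: "(real \<Rightarrow> 'a::euclidean_space measure) \<Rightarrow> 'a measure \<Rightarrow> bool" where
  "weak_limit_at_zero P mu \<longleftrightarrow> prob_space mu \<and> sets mu = sets borel \<and>
     (\<forall>f :: 'a \<Rightarrow> real. continuous_on UNIV f \<and> bounded (range f) \<longrightarrow>
        ((\<lambda>eps. \<integral>x. f x \<partial>(P eps)) \<longlongrightarrow> (\<integral>x. f x \<partial>mu)) (at_right 0))"

definition std_gaussian :: "(real^'d) measure" where
  "std_gaussian = density lborel (\<lambda>x. ennreal (\<Prod>i\<in>UNIV. std_normal_density (x $ i)))"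

definition gen_sets :: "'a measure \<Rightarrow> ('a \<Rightarrow> 'b::topological_space) \<Rightarrow> 'a set set" where
  "gen_sets M X = {X -` A \<inter> space M | A. A \<in> sets borel}"

definition nat_filtration ::
  "'a measure \<Rightarrow> (nat \<Rightarrow> 'a \<Rightarrow> 'b::topological_space) \<Rightarrow> (nat \<Rightarrow> 'a \<Rightarrow> 'b) \<Rightarrow> (nat \<Rightarrow> 'a \<Rightarrow> 'b)
     \<Rightarrow> nat \<Rightarrow> 'a measure" where
  "nat_filtration M x xi w t = sigma (space M)
     ((\<Union>s\<in>{..t}. gen_sets M (x s)) \<union> (\<Union>s\<in>{..<t}. gen_sets M (xi s) \<union> gen_sets M (w s)))"

end

theory Submission
  imports Defs
begin

definition Qf :: "('n::finite \<Rightarrow> 'n \<Rightarrow> bool) \<Rightarrow> real^'d^'n \<Rightarrow> real" where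
  "Qf E y = (\<Sum>i\<in>UNIV. \<Sum>j\<in>UNIV. if E i j then (norm (y$i - y$j))\<^sup>2 else 0)"

lemma Lkr_alt:
  assumes "undirected_graph E"
  shows "kron_laplacian (graph_laplacian E) y $ i = (\<Sum>m\<in>UNIV. if E i m then y$i - y$m else 0)"
proof -
  have irr: "\<not> E i i" using assms unfolding undirected_graph_def by auto
  have neg: "(\<Sum>m\<in>UNIV. if E i m then - y $ m else 0) = - (\<Sum>m\<in>UNIV. if E i m then y $ m else 0)"
    by (subst sum_negf[symmetric]) (rule sum.cong, auto)
  have "kron_laplacian (graph_laplacian E) y $ i = (\<Sum>m\<in>UNIV. graph_laplacian E i m *\<^sub>R y $ m)"
    by (simp add: kron_laplacian_def)
  also have "\<dots> = (\<Sum>m\<in>UNIV. (if m = i then real (card {k. E i k}) *\<^sub>R y$i else 0) + (if E i m then - y$m else 0))"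
    by (rule sum.cong) (auto simp: graph_laplacian_def irr)
  also have "\<dots> = real (card {k. E i k}) *\<^sub>R y$i - (\<Sum>m\<in>UNIV. if E i m then y$m else 0)"
    by (simp add: sum.distrib neg)
  also have "real (card {k. E i k}) *\<^sub>R y$i = (\<Sum>m\<in>UNIV. if E i m then y$i else 0)"
  proof -
    have "(\<Sum>m\<in>UNIV. if E i m then y$i else 0) = (\<Sum>m\<in>{k. E i k}. y$i)"
      by (simp add: sum.If_cases Int_def)
    then show ?thesis by (simp only: sum_constant_scaleR)
  qed
  finally show ?thesis by (simp add: sum_subtractf[symmetric] if_distrib[of "\<lambda>a. a - b" for b] cong: if_cong)
qed


abbreviation LK :: "('n::finite \<Rightarrow> 'n \<Rightarrow> bool) \<Rightarrow> real^'d^'n \<Rightarrow> real^'d^'n" where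
  "LK E \<equiv> kron_laplacian (graph_laplacian E)"

lemma norm_sq_vec: "(norm (y::real^'d^'n))\<^sup>2 = (\<Sum>i\<in>UNIV. (norm (y$i))\<^sup>2)"
  by (simp add: power2_norm_eq_inner inner_vec_def)

lemma LK_diff: "LK E (y - z) = LK E y - LK E z"
  by (simp add: kron_laplacian_def vec_eq_iff scaleR_diff_right sum_subtractf)

lemma LK_scale: "LK E (a *\<^sub>R y) = a *\<^sub>R LK E y"
  by (simp add: kron_laplacian_def vec_eq_iff scaleR_sum_right mult_ac)

lemma LK_const: assumes "undirected_graph E" shows "LK E (\<chi> n. c) = 0"
proof -
  have "LK E (\<chi> n. c) $ i = 0" for i unfolding Lkr_alt[OF assms] by (rule sum.neutral) simp
  then show ?thesis by (simp add: vec_eq_iff del: vec_component)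
qed

lemma sum_LK: assumes "undirected_graph E" shows "(\<Sum>n\<in>UNIV. LK E y $ n) = 0"
proof -
  have sym: "\<And>i j. E i j = E j i" using assms unfolding undirected_graph_def by auto
  define S where "S = (\<Sum>n\<in>UNIV. \<Sum>m\<in>UNIV. if E n m then y$n - y$m else 0)"
  have a: "S = (\<Sum>n\<in>UNIV. \<Sum>m\<in>UNIV. if E m n then y$m - y$n else 0)"
    unfolding S_def by (rule sum.swap)
  have b: "(\<Sum>n\<in>UNIV. \<Sum>m\<in>UNIV. if E m n then y$m - y$n else 0) = - S" unfolding S_def
    by (subst sum_negf[symmetric], rule sum.cong, simp, subst sum_negf[symmetric], rule sum.cong, auto simp: sym)
  from a b have "S + S = 0" by simp
  then have "(2::real) *\<^sub>R S = 0" by (simp add: scaleR_2)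
  then have "S = 0" by simp
  then show ?thesis by (simp add: Lkr_alt[OF assms] S_def)
qed

lemma inner_LK: assumes "undirected_graph E" shows "inner y (LK E y) = Qf E y / 2"
proof -
  have sym: "\<And>i j. E i j = E j i" using assms unfolding undirected_graph_def by auto
  define S where "S = (\<Sum>i\<in>UNIV. \<Sum>m\<in>UNIV. if E i m then inner (y$i) (y$i - y$m) else 0)"
  have 1: "inner y (LK E y) = S"
    unfolding S_def inner_vec_def[of y "LK E y"] Lkr_alt[OF assms] inner_sum_right
    by (rule sum.cong, simp, rule sum.cong, auto)
  have "S = (\<Sum>m\<in>UNIV. \<Sum>i\<in>UNIV. if E i m then inner (y$i) (y$i - y$m) else 0)"
    unfolding S_def by (rule sum.swap)
  also have "\<dots> = (\<Sum>i\<in>UNIV. \<Sum>m\<in>UNIV. if E i m then inner (y$m) (y$m - y$i) else 0)"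
    by (simp add: sym)
  finally have 2: "S = \<dots>" .
  have "S + S = (\<Sum>i\<in>UNIV. \<Sum>m\<in>UNIV. (if E i m then inner (y$i) (y$i - y$m) else 0) + (if E i m then inner (y$m) (y$m - y$i) else 0))"
    by (subst (2) 2) (simp add: S_def sum.distrib)
  also have "\<dots> = Qf E y"
    unfolding Qf_def
    by (rule sum.cong, simp, rule sum.cong, simp) (auto simp: power2_norm_eq_inner algebra_simps inner_commute)
  finally show ?thesis using 1 by simp
qed

lemma Qf_nonneg: "0 \<le> Qf E y"
  unfolding Qf_def by (intro sum_nonneg) auto

lemma norm_LK_sq: assumes "undirected_graph E"
  shows "(norm (LK E y))\<^sup>2 \<le> real CARD('n) * Qf E (y::real^'d^'n::finite)"
proof -
  have "(norm (LK E y $ i))\<^sup>2 \<le> real CARD('n) * (\<Sum>m\<in>UNIV. if E i m then (norm (y$i - y$m))\<^sup>2 else 0)" for i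
  proof -
    have "norm (LK E y $ i) \<le> (\<Sum>m\<in>UNIV. if E i m then norm (y$i - y$m) else 0)"
      unfolding Lkr_alt[OF assms]
      by (rule order.trans[OF norm_sum]) (rule sum_mono, auto)
    hence "(norm (LK E y $ i))\<^sup>2 \<le> (\<Sum>m\<in>UNIV. if E i m then norm (y$i - y$m) else 0)\<^sup>2"
      by (intro power_mono) auto
    also have "\<dots> \<le> (\<Sum>m\<in>UNIV. (if E i m then norm (y$i - y$m) else 0)\<^sup>2) * card (UNIV::'n set)"
      by (rule sum_squared_le_sum_of_squares)
    also have "(\<Sum>m\<in>UNIV. (if E i m then norm (y$i - y$m) else 0)\<^sup>2) = (\<Sum>m\<in>UNIV. if E i m then (norm (y$i - y$m))\<^sup>2 else 0)"
      by (rule sum.cong) auto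
    finally show ?thesis by (simp add: mult.commute)
  qed
  then have "(\<Sum>i\<in>UNIV. (norm (LK E y $ i))\<^sup>2) \<le> (\<Sum>i\<in>UNIV. real CARD('n) * (\<Sum>m\<in>UNIV. if E i m then (norm (y$i - y$m))\<^sup>2 else 0))"
    by (rule sum_mono)
  then show ?thesis by (simp add: norm_sq_vec Qf_def sum_distrib_left)
qed

lemma Qf_le: "Qf E y \<le> 4 * real CARD('n) * (norm (y::real^'d^'n::finite))\<^sup>2"
proof -
  have "Qf E y \<le> (\<Sum>i\<in>UNIV. \<Sum>j\<in>UNIV. 2 * (norm (y$i))\<^sup>2 + 2 * (norm (y$j))\<^sup>2)"
    unfolding Qf_def
  proof (intro sum_mono)
    fix i j
    have "norm (y$i - y$j) \<le> norm (y$i) + norm (y$j)" by (rule norm_triangle_ineq4)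
    hence "(norm (y$i - y$j))\<^sup>2 \<le> (norm (y$i) + norm (y$j))\<^sup>2" by (intro power_mono) auto
    also have "\<dots> \<le> 2 * (norm (y$i))\<^sup>2 + 2 * (norm (y$j))\<^sup>2"
      using zero_le_power2[of "norm (y$i) - norm (y$j)"] by (simp add: power2_eq_square algebra_simps)
    finally show "(if E i j then (norm (y$i - y$j))\<^sup>2 else 0) \<le> 2 * (norm (y$i))\<^sup>2 + 2 * (norm (y$j))\<^sup>2"
      by auto
  qed
  also have "\<dots> = 4 * real CARD('n) * (norm y)\<^sup>2"
    by (simp add: sum.distrib norm_sq_vec sum_distrib_left[symmetric])
  finally show ?thesis .
qed

lemma Qf_term: assumes "E b c" shows "norm (y$b - y$c) \<le> sqrt (Qf E (y::real^'d^'n::finite))"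
proof -
  have "(if E b c then (norm (y$b - y$c))\<^sup>2 else 0) \<le> (\<Sum>j\<in>UNIV. if E b j then (norm (y$b - y$j))\<^sup>2 else 0)"
    by (rule member_le_sum) auto
  also have "\<dots> \<le> Qf E y" unfolding Qf_def
    by (rule member_le_sum[of b UNIV "\<lambda>i. \<Sum>j\<in>UNIV. if E i j then (norm (y$i - y$j))\<^sup>2 else 0"]) (auto intro: sum_nonneg)
  finally have "(norm (y$b - y$c))\<^sup>2 \<le> Qf E y" using assms by simp
  then show ?thesis using real_le_rsqrt by blast
qed

lemma path_bound:
  assumes "(i, j) \<in> {(a, b). E a b}\<^sup>*"
  shows "\<exists>k::real. \<forall>y::real^'d^'n::finite. norm (y$i - y$j) \<le> k * sqrt (Qf E y)"
  using assms
proof (induction rule: rtrancl_induct)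
  case base
  then show ?case by (intro exI[of _ 0]) auto
next
  case (step b c)
  then obtain k where k: "\<And>y::real^'d^'n. norm (y$i - y$b) \<le> k * sqrt (Qf E y)" by blast
  have "norm (y$i - y$c) \<le> (k + 1) * sqrt (Qf E y)" for y :: "real^'d^'n"
  proof -
    have "norm (y$i - y$c) \<le> norm (y$i - y$b) + norm (y$b - y$c)"
      using norm_triangle_ineq[of "y$i - y$b" "y$b - y$c"] by simp
    also have "\<dots> \<le> k * sqrt (Qf E y) + sqrt (Qf E y)"
      using k[of y] Qf_term[of E b c y] step by auto
    finally show ?thesis by (simp add: algebra_simps)
  qed
  then show ?case by blast
qed

lemma spectral_gap:
  assumes "connected_graph E"
  shows "\<exists>\<mu>>0. \<forall>y::real^'d^'n::finite. (\<Sum>n\<in>UNIV. y$n) = 0 \<longrightarrow> \<mu> * (norm y)\<^sup>2 \<le> Qf E y"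
proof -
  have "\<forall>i j. \<exists>k::real. \<forall>y::real^'d^'n. norm (y$i - y$j) \<le> k * sqrt (Qf E y)"
    using assms path_bound unfolding connected_graph_def by blast
  then obtain kf where kf: "\<And>i j (y::real^'d^'n). norm (y$i - y$j) \<le> kf i j * sqrt (Qf E y)"
    by metis
  define K0 where "K0 = (\<Sum>i\<in>UNIV. \<Sum>j\<in>UNIV. \<bar>kf i j\<bar>)"
  have K0: "kf i j \<le> K0" for i j
  proof -
    have "kf i j \<le> \<bar>kf i j\<bar>" by simp
    also have "\<dots> \<le> (\<Sum>j\<in>UNIV. \<bar>kf i j\<bar>)" by (rule member_le_sum) auto
    also have "\<dots> \<le> K0" unfolding K0_def
      by (rule member_le_sum[of i UNIV "\<lambda>i. \<Sum>j\<in>UNIV. \<bar>kf i j\<bar>"]) (auto intro: sum_nonneg)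
    finally show ?thesis .
  qed
  have K0nn: "0 \<le> K0" unfolding K0_def by (intro sum_nonneg) auto
  define N where "N = real CARD('n)"
  have Npos: "N > 0" unfolding N_def by simp
  define \<mu> where "\<mu> = 1 / (N * K0\<^sup>2 + 1)"
  have mupos: "\<mu> > 0" unfolding \<mu>_def using Npos K0nn by (simp add: add_nonneg_pos)
  show ?thesis
  proof (intro exI[of _ \<mu>] conjI allI impI mupos)
    fix y :: "real^'d^'n"
    assume s0: "(\<Sum>n\<in>UNIV. y$n) = 0"
    let ?Q = "Qf E y"
    have Qnn: "0 \<le> ?Q" by (rule Qf_nonneg)
    have yi: "norm (y$i) \<le> K0 * sqrt ?Q" for i
    proof -
      have "N *\<^sub>R y$i = (\<Sum>j\<in>UNIV. y$i - y$j)"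
        by (simp add: sum_subtractf s0 N_def sum_constant_scaleR del: sum_constant)
      hence "norm (N *\<^sub>R y$i) \<le> (\<Sum>j\<in>UNIV. norm (y$i - y$j))"
        using norm_sum[of "\<lambda>j. y$i - y$j" UNIV] by simp
      hence "N * norm (y$i) \<le> (\<Sum>j\<in>UNIV. norm (y$i - y$j))"
        using Npos by simp
      also have "\<dots> \<le> (\<Sum>j\<in>(UNIV::'n set). K0 * sqrt ?Q)"
      proof (rule sum_mono)
        fix j
        have "norm (y$i - y$j) \<le> kf i j * sqrt ?Q" by (rule kf)
        also have "\<dots> \<le> K0 * sqrt ?Q" by (rule mult_right_mono[OF K0]) (simp add: Qnn)
        finally show "norm (y$i - y$j) \<le> K0 * sqrt ?Q" .
      qed
      also have "\<dots> = N * (K0 * sqrt ?Q)" by (simp add: N_def)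
      finally show ?thesis using Npos by simp
    qed
    have "(norm y)\<^sup>2 = (\<Sum>i\<in>UNIV. (norm (y$i))\<^sup>2)" by (rule norm_sq_vec)
    also have "\<dots> \<le> (\<Sum>i\<in>(UNIV::'n set). K0\<^sup>2 * ?Q)"
    proof (rule sum_mono)
      fix i
      have "(norm (y$i))\<^sup>2 \<le> (K0 * sqrt ?Q)\<^sup>2" by (rule power_mono[OF yi]) simp
      also have "\<dots> = K0\<^sup>2 * ?Q" using Qnn by (simp add: power_mult_distrib)
      finally show "(norm (y$i))\<^sup>2 \<le> K0\<^sup>2 * ?Q" .
    qed
    also have "\<dots> = N * K0\<^sup>2 * ?Q" by (simp add: N_def)
    also have "\<dots> \<le> (N * K0\<^sup>2 + 1) * ?Q" using Qnn by (simp add: algebra_simps)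
    finally have "(norm y)\<^sup>2 \<le> (N * K0\<^sup>2 + 1) * ?Q" .
    then show "\<mu> * (norm y)\<^sup>2 \<le> ?Q" unfolding \<mu>_def using Npos K0nn
      by (simp add: divide_simps add_nonneg_pos mult.commute)
  qed
qed

definition avgv :: "real^'d^'n::finite \<Rightarrow> real^'d" where
  "avgv z = (1 / real CARD('n)) *\<^sub>R (\<Sum>m\<in>UNIV. z$m)"

definition Pr :: "real^'d^'n::finite \<Rightarrow> real^'d^'n" where
  "Pr z = (\<chi> n. z$n - avgv z)"

lemma Pr_sum: "(\<Sum>n\<in>UNIV. Pr z $ n) = 0"
  by (simp add: Pr_def avgv_def sum_subtractf sum_constant_scaleR del: sum_constant)

lemma avgv_add: "avgv (a + b) = avgv a + avgv b"
  by (simp add: avgv_def sum.distrib scaleR_add_right)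
lemma avgv_diff: "avgv (a - b) = avgv a - avgv b"
  by (simp add: avgv_def sum_subtractf scaleR_diff_right)
lemma avgv_scale: "avgv (c *\<^sub>R a) = c *\<^sub>R avgv a"
  by (simp add: avgv_def scaleR_sum_right[symmetric])

lemma Pr_add: "Pr (a + b) = Pr a + Pr b"
  by (simp add: Pr_def avgv_add vec_eq_iff)
lemma Pr_diff: "Pr (a - b) = Pr a - Pr b"
  by (simp add: Pr_def avgv_diff vec_eq_iff)
lemma Pr_scale: "Pr (c *\<^sub>R a) = c *\<^sub>R Pr a"
  by (simp add: Pr_def avgv_scale vec_eq_iff algebra_simps)

lemma Pr_LK: assumes "undirected_graph E" shows "Pr (LK E z) = LK E (Pr z)"
proof -
  have "avgv (LK E z) = 0" by (simp add: avgv_def sum_LK[OF assms])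
  hence 1: "Pr (LK E z) = LK E z" by (simp add: Pr_def vec_eq_iff)
  have "Pr z = z - (\<chi> n. avgv z)" by (simp add: Pr_def vec_eq_iff)
  hence "LK E (Pr z) = LK E z" by (simp add: LK_diff LK_const[OF assms])
  with 1 show ?thesis by simp
qed

lemma norm_Pr: "norm (Pr v) \<le> norm (v::real^'d^'n::finite)"
proof -
  define c :: "real^'d^'n" where "c = (\<chi> n. avgv v)"
  have v: "v = Pr v + c" by (simp add: Pr_def c_def vec_eq_iff)
  have "inner (Pr v) c = (\<Sum>n\<in>UNIV. inner (Pr v $ n) (avgv v))"
    unfolding c_def by (rule trans[OF inner_vec_def]) simp
  also have "\<dots> = inner (\<Sum>n\<in>UNIV. Pr v $ n) (avgv v)" by (simp add: inner_sum_left)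
  also have "\<dots> = 0" by (simp add: Pr_sum)
  finally have i0: "inner (Pr v) c = 0" .
  have "(norm v)\<^sup>2 = (norm (Pr v))\<^sup>2 + (norm c)\<^sup>2"
    using i0 inner_commute[of c "Pr v"] by (subst v) (simp add: power2_norm_eq_inner inner_add_left inner_add_right)
  hence "(norm (Pr v))\<^sup>2 \<le> (norm v)\<^sup>2" by simp
  then show ?thesis by (simp add: power2_le_iff_abs_le)
qed

lemma LK_step_sq:
  assumes "undirected_graph E" "0 \<le> \<beta>" "\<beta> * real CARD('n) \<le> 1/2"
  shows "(norm (y - \<beta> *\<^sub>R LK E (y::real^'d^'n::finite)))\<^sup>2 \<le> (norm y)\<^sup>2 - \<beta> * Qf E y / 2"
proof -
  have "(norm (y - \<beta> *\<^sub>R LK E y))\<^sup>2 = (norm y)\<^sup>2 - 2 * \<beta> * inner y (LK E y) + \<beta>\<^sup>2 * (norm (LK E y))\<^sup>2"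
    by (simp only: power2_norm_eq_inner inner_diff_left inner_diff_right inner_scaleR_left inner_scaleR_right inner_commute[of "LK E y" y]) (simp add: power2_eq_square algebra_simps)
  also have "\<dots> \<le> (norm y)\<^sup>2 - \<beta> * Qf E y + \<beta>\<^sup>2 * (real CARD('n) * Qf E y)"
  proof -
    have "\<beta>\<^sup>2 * (norm (LK E y))\<^sup>2 \<le> \<beta>\<^sup>2 * (real CARD('n) * Qf E y)"
      using norm_LK_sq[OF assms(1), of y] by (simp add: mult_left_mono)
    moreover have "2 * \<beta> * inner y (LK E y) = \<beta> * Qf E y" using inner_LK[OF assms(1), of y] by simp
    ultimately show ?thesis by linarith
  qed
  also have "\<dots> = (norm y)\<^sup>2 - \<beta> * Qf E y * (1 - \<beta> * real CARD('n))"
    by (simp add: power2_eq_square algebra_simps)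
  also have "\<dots> \<le> (norm y)\<^sup>2 - \<beta> * Qf E y / 2"
  proof -
    have "\<beta> * Qf E y * (1/2) \<le> \<beta> * Qf E y * (1 - \<beta> * real CARD('n))"
      using assms Qf_nonneg[of E y] by (intro mult_left_mono) auto
    then show ?thesis by simp
  qed
  finally show ?thesis .
qed

lemma LK_nonexp:
  assumes "undirected_graph E" "0 \<le> \<beta>" "\<beta> * real CARD('n) \<le> 1/2"
  shows "norm (y - \<beta> *\<^sub>R LK E (y::real^'d^'n::finite)) \<le> norm y"
proof -
  have "(norm (y - \<beta> *\<^sub>R LK E y))\<^sup>2 \<le> (norm y)\<^sup>2"
    using LK_step_sq[OF assms, of y] Qf_nonneg[of E y] assms(2) by (smt (verit) divide_nonneg_nonneg mult_nonneg_nonneg)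
  then show ?thesis by (simp add: power2_le_iff_abs_le)
qed

lemma LK_contr:
  assumes "undirected_graph E" "0 \<le> \<beta>" "\<beta> * real CARD('n) \<le> 1/2" "\<beta> * \<mu> \<le> 1" "0 \<le> \<mu>"
    and gap: "\<mu> * (norm y)\<^sup>2 \<le> Qf E (y::real^'d^'n::finite)"
  shows "norm (y - \<beta> *\<^sub>R LK E y) \<le> (1 - \<beta> * \<mu> / 4) * norm y"
proof -
  have "(norm (y - \<beta> *\<^sub>R LK E y))\<^sup>2 \<le> (norm y)\<^sup>2 - \<beta> * Qf E y / 2"
    by (rule LK_step_sq[OF assms(1-3)])
  also have "\<dots> \<le> (norm y)\<^sup>2 - \<beta> * (\<mu> * (norm y)\<^sup>2) / 2"
    using mult_left_mono[OF gap assms(2)] by simp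
  also have "\<dots> \<le> ((1 - \<beta> * \<mu> / 4) * norm y)\<^sup>2"
  proof -
    have "0 \<le> (\<beta> * \<mu>)\<^sup>2 / 16 * (norm y)\<^sup>2" by simp
    then show ?thesis by (simp add: power2_eq_square algebra_simps)
  qed
  finally have "(norm (y - \<beta> *\<^sub>R LK E y))\<^sup>2 \<le> ((1 - \<beta> * \<mu> / 4) * norm y)\<^sup>2" .
  moreover have "0 \<le> (1 - \<beta> * \<mu> / 4) * norm y" using assms(4) by simp
  ultimately show ?thesis using power2_le_imp_le by blast
qed

lemma growth_aux:
  fixes u a b :: "nat \<Rightarrow> real"
  assumes rec: "\<And>s. u (Suc s) \<le> (1 + a s) * u s + b s"
    and a0: "\<And>s. 0 \<le> a s" and b0: "\<And>s. 0 \<le> b s" and u0: "0 \<le> u 0"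
  shows "u t \<le> exp (\<Sum>s<t. a s) * (u 0 + (\<Sum>s<t. b s))"
proof (induction t)
  case 0
  then show ?case by simp
next
  case (Suc t)
  let ?S = "\<Sum>s<t. a s" and ?B = "u 0 + (\<Sum>s<t. b s)"
  have Bnn: "0 \<le> ?B" using u0 b0 by (simp add: sum_nonneg)
  have Snn: "0 \<le> ?S" using a0 by (simp add: sum_nonneg)
  have "u (Suc t) \<le> (1 + a t) * u t + b t" by (rule rec)
  also have "\<dots> \<le> (1 + a t) * (exp ?S * ?B) + b t"
    using Suc a0[of t] by (intro add_right_mono mult_left_mono) auto
  also have "\<dots> \<le> exp (a t) * (exp ?S * ?B) + exp (?S + a t) * b t"
  proof (intro add_mono mult_right_mono)
    show "1 + a t \<le> exp (a t)" by (rule exp_ge_add_one_self)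
    show "0 \<le> exp ?S * ?B" using Bnn by simp
    have "1 \<le> exp (?S + a t)" using Snn a0[of t] by simp
    then show "b t \<le> exp (?S + a t) * b t" using mult_right_mono[of 1 "exp (?S + a t)" "b t"] b0[of t] by simp
  qed
  also have "\<dots> = exp (?S + a t) * (?B + b t)"
    by (simp add: exp_add algebra_simps)
  finally show ?case by (simp add: add.commute add.left_commute)
qed

lemma growth:
  fixes u a b :: "nat \<Rightarrow> real"
  assumes rec: "\<And>s. u (Suc s) \<le> (1 + a s) * u s + b s"
    and a0: "\<And>s. 0 \<le> a s" and b0: "\<And>s. 0 \<le> b s" and u0: "0 \<le> u 0"
    and A: "\<And>t. (\<Sum>s<t. a s) \<le> A"
  shows "u t \<le> exp A * (u 0 + (\<Sum>s<t. b s))"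
proof -
  have Bnn: "0 \<le> u 0 + (\<Sum>s<t. b s)" using u0 b0 by (simp add: sum_nonneg)
  have "u t \<le> exp (\<Sum>s<t. a s) * (u 0 + (\<Sum>s<t. b s))" by (rule growth_aux[OF assms(1-4)])
  also have "\<dots> \<le> exp A * (u 0 + (\<Sum>s<t. b s))"
    using A[of t] Bnn by (intro mult_right_mono) auto
  finally show ?thesis .
qed

lemma powr_step_bound:
  fixes t r :: real
  assumes "1 \<le> t" "0 \<le> r" "r < t"
  shows "t powr (-r) * (1 - r / t) \<le> (t + 1) powr (-r)"
proof -
  have tp: "0 < t" using assms by simp
  have pos: "0 < 1 - r / t" using assms by (simp add: field_simps)
  have "ln (1 - r / t) \<le> - (r / t)" using ln_le_minus_one[OF pos] by simp
  also have "- (r / t) \<le> - r * ln (1 + 1 / t)"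
  proof -
    have "0 < 1 + 1 / t" using tp by (metis add_pos_pos divide_pos_pos zero_less_one)
    then have "ln (1 + 1 / t) \<le> 1 / t" using ln_le_minus_one[of "1 + 1/t"] by simp
    then have "r * ln (1 + 1 / t) \<le> r * (1 / t)" using assms by (intro mult_left_mono) auto
    then show ?thesis by simp
  qed
  also have "- r * ln (1 + 1 / t) = ln ((t + 1) powr (-r)) - ln (t powr (-r))"
  proof -
    have "1 + 1 / t = (t + 1) / t" using tp by (simp add: field_simps)
    then show ?thesis using tp by (simp add: ln_powr ln_div algebra_simps)
  qed
  finally have "ln (t powr (-r)) + ln (1 - r / t) \<le> ln ((t + 1) powr (-r))" by simp
  then have "ln (t powr (-r) * (1 - r / t)) \<le> ln ((t + 1) powr (-r))"
    using tp pos by (simp add: ln_mult)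
  moreover have p1: "0 < t powr (-r) * (1 - r / t)" using tp pos by simp
  moreover have p2: "0 < (t + 1) powr (-r)" using tp by simp
  ultimately show ?thesis using ln_le_cancel_iff[OF p1 p2] by blast
qed

lemma contraction:
  fixes u :: "nat \<Rightarrow> real"
  assumes rec: "\<And>t. t \<ge> T \<Longrightarrow> u (Suc t) \<le> (1 - c * real t powr (-p)) * u t + D * real t powr (-q)"
    and u0: "\<And>t. 0 \<le> u t" and c: "0 < c" and D: "0 \<le> D" and p: "0 < p" "p < 1" and pq: "p < q"
    and tau: "0 \<le> \<tau>" "\<tau> < q - p"
  shows "(\<lambda>t. real t powr \<tau> * u t) \<longlonglongrightarrow> 0"
proof -
  define r where "r = q - p"
  have r: "0 < r" using pq by (simp add: r_def)
  have lim1: "(\<lambda>t. real t powr (-p)) \<longlonglongrightarrow> 0"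
    by (rule tendsto_neg_powr[OF _ filterlim_real_sequentially]) (use p in simp)
  have lim2: "(\<lambda>t. real t powr (p - 1)) \<longlonglongrightarrow> 0"
    by (rule tendsto_neg_powr[OF _ filterlim_real_sequentially]) (use p in simp)
  have ev1: "eventually (\<lambda>t. real t powr (-p) < 1 / c) sequentially"
    using order_tendstoD(2)[OF lim1] c by simp
  have ev2: "eventually (\<lambda>t. real t powr (p - 1) < c / (2 * r)) sequentially"
    using order_tendstoD(2)[OF lim2] c r by simp
  have ev3: "eventually (\<lambda>t. r + 1 + real T \<le> real t) sequentially"
    using filterlim_real_sequentially by (simp add: filterlim_at_top)
  obtain T1 where T1: "\<And>t. t \<ge> T1 \<Longrightarrow> real t powr (-p) < 1 / c \<and> real t powr (p - 1) < c / (2 * r) \<and> r + 1 + real T \<le> real t"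
    using eventually_conj[OF ev1 eventually_conj[OF ev2 ev3]] unfolding eventually_sequentially by blast
  have T1ge: "1 \<le> real T1" "T \<le> T1" using T1[of T1] r by auto
  define A where "A = max (u T1 * real T1 powr r) (2 * D / c)"
  have A0: "0 \<le> A" using D c u0[of T1] unfolding A_def by (simp add: max_def)
  have bound: "u t \<le> A * real t powr (-r)" if "t \<ge> T1" for t
    using that
  proof (induction t rule: dec_induct)
    case base
    have "u T1 = (u T1 * real T1 powr r) * real T1 powr (-r)"
      using T1ge by (simp add: powr_minus field_simps)
    also have "\<dots> \<le> A * real T1 powr (-r)" unfolding A_def by (intro mult_right_mono) auto
    finally show ?case .
  next
    case (step t)
    let ?t = "real t"
    have tT: "t \<ge> T" and t1: "1 \<le> ?t" and rt: "r < ?t" and Xc: "?t powr (-p) < 1 / c" and Zc: "?t powr (p - 1) < c / (2 * r)"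
      using T1[OF step(1)] T1ge step(1) by auto
    have tp: "0 < ?t" using t1 by simp
    define X where "X = ?t powr (-p)"
    define Y where "Y = ?t powr (-r)"
    define Z where "Z = ?t powr (p - 1)"
    have XY: "?t powr (-q) = X * Y" unfolding X_def Y_def r_def using tp by (simp add: powr_add[symmetric])
    have XZ: "1 / ?t = Z * X"
    proof -
      have "Z * X = ?t powr ((p - 1) + (-p))" unfolding X_def Z_def by (simp only: powr_add)
      also have "\<dots> = ?t powr (-1)" by simp
      also have "\<dots> = 1 / ?t" using tp by (simp add: powr_minus divide_inverse)
      finally show ?thesis by simp
    qed
    have X0: "0 \<le> X" and Y0: "0 \<le> Y" and Z0: "0 \<le> Z" unfolding X_def Y_def Z_def by auto
    have coef: "0 \<le> 1 - c * X" using Xc c unfolding X_def by (simp add: field_simps)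
    have "u (Suc t) \<le> (1 - c * X) * u t + D * (X * Y)" using rec[OF tT] XY X_def by simp
    also have "\<dots> \<le> (1 - c * X) * (A * Y) + D * (X * Y)"
      using step(3) coef Y_def by (intro add_right_mono mult_left_mono) auto
    also have "\<dots> \<le> A * Y * (1 - r / ?t)"
    proof -
      have "A * r * Z \<le> A * (c / 2)"
      proof -
        have "r * Z \<le> c / 2" using Zc r unfolding Z_def by (simp add: field_simps)
        then show ?thesis using A0 by (metis mult.assoc mult_left_mono)
      qed
      moreover have "D \<le> A * c / 2" using c unfolding A_def by (simp add: field_simps max_def)
      ultimately have "D + A * r * Z \<le> A * c" by simp
      then have "X * Y * (D + A * r * Z) \<le> X * Y * (A * c)" using X0 Y0 by (intro mult_left_mono) auto
      moreover have "A * Y * (1 - r / ?t) = A * Y - A * Y * r * (Z * X)"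
      proof -
        have "r / ?t = r * (1 / ?t)" by simp
        also have "\<dots> = r * (Z * X)" using XZ by simp
        finally show ?thesis by (simp add: algebra_simps)
      qed
      ultimately show ?thesis by (simp add: algebra_simps)
    qed
    also have "\<dots> \<le> A * (?t + 1) powr (-r)"
      unfolding Y_def using powr_step_bound[OF t1 _ rt] r A0 by (simp add: mult.assoc mult_left_mono)
    finally show ?case by (simp add: add.commute)
  qed
  have lim3: "(\<lambda>t. A * real t powr (\<tau> - r)) \<longlonglongrightarrow> 0"
    using tendsto_mult_right_zero[OF tendsto_neg_powr[OF _ filterlim_real_sequentially]] tau r_def
    by (metis diff_less_0_iff_less tendsto_mult_left_zero)
  show ?thesis
  proof (rule tendsto_sandwich[OF _ _ tendsto_const lim3])
    show "eventually (\<lambda>t. 0 \<le> real t powr \<tau> * u t) sequentially" using u0 by simp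
    show "eventually (\<lambda>t. real t powr \<tau> * u t \<le> A * real t powr (\<tau> - r)) sequentially"
      unfolding eventually_sequentially
    proof (intro exI[of _ T1] allI impI)
      fix t assume "T1 \<le> t"
      then have "real t powr \<tau> * u t \<le> real t powr \<tau> * (A * real t powr (-r))"
        using bound by (intro mult_left_mono) auto
      also have "\<dots> = A * real t powr (\<tau> - r)" by (simp add: powr_add[symmetric] algebra_simps)
      finally show "real t powr \<tau> * u t \<le> A * real t powr (\<tau> - r)" .
    qed
  qed
qed

lemma sqrt_step: fixes x :: real assumes "1 \<le> x" shows "x powr (-1/2) + 3 * x powr (1/2) \<le> 3 * (x + 1) powr (1/2)"
proof -
  define s where "s = sqrt x"
  define s' where "s' = sqrt (x + 1)"
  have s1: "1 \<le> s" unfolding s_def using assms by simp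
  have ss: "s'\<^sup>2 = s\<^sup>2 + 1" unfolding s_def s'_def using assms by simp
  have s'0: "0 \<le> s'" unfolding s'_def using assms by simp
  have e1: "x powr (-1/2) = 1 / s" unfolding s_def using assms
    by (simp add: powr_minus_divide powr_half_sqrt)
  have e2: "x powr (1/2) = s" "(x+1) powr (1/2) = s'" unfolding s_def s'_def using assms by (simp_all add: powr_half_sqrt)
  have "(1 + 3 * s\<^sup>2)\<^sup>2 \<le> (3 * s * s')\<^sup>2"
  proof -
    have "(3 * s * s')\<^sup>2 = 9 * s\<^sup>2 * s'\<^sup>2" by (simp add: power_mult_distrib)
    also have "\<dots> = 9 * s\<^sup>2 * s\<^sup>2 + 9 * s\<^sup>2" using ss by (simp add: algebra_simps)
    finally have 1: "(3 * s * s')\<^sup>2 = 9 * s\<^sup>2 * s\<^sup>2 + 9 * s\<^sup>2" .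
    have "1 \<le> s\<^sup>2" using s1 by (simp add: one_le_power)
    moreover have eq: "(1 + 3 * q)\<^sup>2 = 1 + 6 * q + 9 * q * q" for q :: real
      by (simp add: power2_eq_square algebra_simps)
    ultimately show ?thesis unfolding 1 using eq[of "s\<^sup>2"] by linarith
  qed
  then have "1 + 3 * s\<^sup>2 \<le> 3 * s * s'" by (rule power2_le_imp_le) (use s1 s'0 in auto)
  then have "(1 + 3 * s\<^sup>2) / s \<le> (3 * s * s') / s" using s1 by (intro divide_right_mono) auto
  also have "(3 * s * s') / s = 3 * s'" using s1 by simp
  finally have "(1 + 3 * s\<^sup>2) / s \<le> 3 * s'" .
  moreover have "(1 + 3 * s\<^sup>2) / s = 1 / s + 3 * s" using s1 by (simp add: add_divide_distrib power2_eq_square)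
  ultimately have "1 / s + 3 * s \<le> 3 * s'" by simp
  then show ?thesis unfolding e1 e2 .
qed

lemma sqrt_sum:
  assumes "1 \<le> T"
  shows "(\<Sum>s<m. real (T + s) powr (-1/2)) \<le> 3 * real (T + m) powr (1/2)"
proof (induction m)
  case 0
  then show ?case by simp
next
  case (Suc m)
  have x1: "1 \<le> real (T + m)" using assms by simp
  have "(\<Sum>s<Suc m. real (T + s) powr (-1/2)) = (\<Sum>s<m. real (T + s) powr (-1/2)) + real (T + m) powr (-1/2)"
    by simp
  also have "\<dots> \<le> 3 * real (T + m) powr (1/2) + real (T + m) powr (-1/2)"
    using Suc by simp
  also have "\<dots> \<le> 3 * (real (T + m) + 1) powr (1/2)" using sqrt_step[OF x1] by simp
  finally show ?case by (simp add: ac_simps)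
qed

lemma growth_poly:
  fixes u a :: "nat \<Rightarrow> real"
  assumes rec: "\<And>t. t \<ge> T \<Longrightarrow> u (Suc t) \<le> (1 + a t) * u t + D * real t powr (e - 1/2)"
    and a0: "\<And>t. 0 \<le> a t" and asum: "summable a" and u0: "\<And>t. 0 \<le> u t"
    and D: "0 \<le> D" and e: "0 \<le> e" and T: "1 \<le> T"
  shows "\<exists>C. \<forall>t\<ge>T. u t \<le> C * real t powr (1/2 + e)"
proof -
  define A where "A = suminf (\<lambda>s. a (s + T))"
  have sumA: "summable (\<lambda>s. a (s + T))" using summable_ignore_initial_segment[OF asum] by simp
  have A: "(\<Sum>s<m. a (s + T)) \<le> A" for m
    unfolding A_def by (rule sum_le_suminf[OF sumA]) (auto simp: a0)
  define C where "C = exp A * (u T + 3 * D)"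
  have main: "u (T + m) \<le> C * real (T + m) powr (1/2 + e)" for m
  proof -
    have g: "u (m + T) \<le> exp A * (u (0 + T) + (\<Sum>s<m. D * real (s + T) powr (e - 1/2)))"
    proof (rule growth[where u = "\<lambda>s. u (s + T)" and a = "\<lambda>s. a (s + T)"])
      show "u (Suc s + T) \<le> (1 + a (s + T)) * u (s + T) + D * real (s + T) powr (e - 1/2)" for s
        using rec[of "s + T"] by simp
    qed (use a0 u0 D A in auto)
    have "(\<Sum>s<m. D * real (s + T) powr (e - 1/2)) \<le> (\<Sum>s<m. D * (real (T + m) powr e * real (T + s) powr (-1/2)))"
    proof (rule sum_mono)
      fix s assume "s \<in> {..<m}"
      then have le: "real (s + T) \<le> real (T + m)" by simp
      have pos: "0 < real (s + T)" using T by simp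
      have "real (s + T) powr (e - 1/2) = real (s + T) powr e * real (s + T) powr (-1/2)"
        using pos by (simp add: powr_add[symmetric])
      also have "\<dots> \<le> real (T + m) powr e * real (T + s) powr (-1/2)"
      proof -
        have "real (s + T) powr e \<le> real (T + m) powr e" using le pos e by (intro powr_mono2) auto
        then show ?thesis using mult_right_mono[of "real (s + T) powr e" "real (T + m) powr e" "real (s + T) powr (-1/2)"]
          by (simp add: add.commute)
      qed
      finally show "D * real (s + T) powr (e - 1/2) \<le> D * (real (T + m) powr e * real (T + s) powr (-1/2))"
        using D by (intro mult_left_mono) auto
    qed
    also have "\<dots> = D * real (T + m) powr e * (\<Sum>s<m. real (T + s) powr (-1/2))"
      by (simp add: sum_distrib_left mult.assoc)
    also have "\<dots> \<le> D * real (T + m) powr e * (3 * real (T + m) powr (1/2))"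
      using sqrt_sum[OF T, of m] D by (intro mult_left_mono) auto
    also have "\<dots> = 3 * D * (real (T + m) powr e * real (T + m) powr (1/2))"
      by (simp only: mult_ac)
    also have "\<dots> = 3 * D * real (T + m) powr (1/2 + e)"
      by (simp only: powr_add[symmetric] add.commute)
    finally have s: "(\<Sum>s<m. D * real (s + T) powr (e - 1/2)) \<le> 3 * D * real (T + m) powr (1/2 + e)" .
    have one: "1 \<le> real (T + m) powr (1/2 + e)" using T e by (simp add: ge_one_powr_ge_zero)
    have g': "u (T + m) \<le> exp A * (u T + (\<Sum>s<m. D * real (s + T) powr (e - 1/2)))"
      using g by (simp add: add.commute)
    have "u (T + m) \<le> exp A * (u T + 3 * D * real (T + m) powr (1/2 + e))"
      by (rule order.trans[OF g']) (intro mult_left_mono add_left_mono s, simp)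
    also have "\<dots> \<le> exp A * (u T * real (T + m) powr (1/2 + e) + 3 * D * real (T + m) powr (1/2 + e))"
    proof -
      have "u T * 1 \<le> u T * real (T + m) powr (1/2 + e)" using one u0[of T] by (intro mult_left_mono) auto
      then show ?thesis by (intro mult_left_mono add_right_mono) auto
    qed
    also have "\<dots> = C * real (T + m) powr (1/2 + e)" unfolding C_def by (simp add: algebra_simps)
    finally show ?thesis .
  qed
  show ?thesis
  proof (intro exI[of _ C] allI impI)
    fix t assume "T \<le> t"
    then show "u t \<le> C * real t powr (1/2 + e)" using main[of "t - T"] by simp
  qed
qed

lemma AE_eventually_le:
  fixes f :: "nat \<Rightarrow> 'a \<Rightarrow> real"
  assumes P: "prob_space M" and meas: "\<And>t. f t \<in> borel_measurable M"
    and bnd: "\<And>t. t \<ge> Tz \<Longrightarrow> emeasure M {\<omega>\<in>space M. thr t < f t \<omega>} \<le> ennreal (bd t)"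
    and sbd: "summable bd" and bd0: "\<And>t. 0 \<le> bd t"
  shows "AE \<omega> in M. eventually (\<lambda>t. f t \<omega> \<le> thr t) sequentially"
proof -
  interpret prob_space M by (rule P)
  define A where "A t = (if t \<ge> Tz then {\<omega>\<in>space M. thr t < f t \<omega>} else {})" for t
  have [measurable]: "f t \<in> borel_measurable M" for t by (rule meas)
  have "{\<omega>\<in>space M. thr t < f t \<omega>} \<in> sets M" for t by measurable
  then have Am[measurable]: "A t \<in> sets M" for t
    unfolding A_def by auto
  have mA: "measure M (A t) \<le> bd t" for t
  proof (cases "t \<ge> Tz")
    case True
    have "ennreal (measure M (A t)) = emeasure M (A t)" by (simp add: emeasure_eq_measure)
    also have "\<dots> \<le> ennreal (bd t)" using bnd[OF True] True by (simp add: A_def)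
    finally show ?thesis using bd0[of t] by simp
  next
    case False
    then show ?thesis using bd0[of t] by (simp add: A_def)
  qed
  have "summable (\<lambda>t. measure M (A t))"
    by (rule summable_comparison_test'[OF sbd, of 0]) (use mA in auto)
  then have "AE \<omega> in M. eventually (\<lambda>t. \<omega> \<in> space M - A t) sequentially"
    by (intro borel_cantelli_AE1) (auto simp: emeasure_eq_measure)
  then show ?thesis
  proof (rule AE_mp, intro AE_I2 impI)
    fix \<omega> assume \<omega>: "\<omega> \<in> space M" and ev: "eventually (\<lambda>t. \<omega> \<in> space M - A t) sequentially"
    have "eventually (\<lambda>t. t \<ge> Tz) sequentially" by (rule eventually_ge_at_top)
    with ev show "eventually (\<lambda>t. f t \<omega> \<le> thr t) sequentially"
      by eventually_elim (use \<omega> in \<open>auto simp: A_def not_less\<close>)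
  qed
qed

lemma xi_bound:
  fixes f :: "nat \<Rightarrow> 'a \<Rightarrow> real"
  assumes P: "prob_space M" and meas: "\<And>t. f t \<in> borel_measurable M"
    and mom: "\<And>t. (\<integral>\<^sup>+\<omega>. ennreal ((f t \<omega>)\<^sup>2) \<partial>M) \<le> ennreal B" and e: "0 < e"
  shows "AE \<omega> in M. eventually (\<lambda>t. f t \<omega> \<le> real t powr (1/2 + e)) sequentially"
proof (rule AE_eventually_le[OF P meas, where Tz = 1 and bd = "\<lambda>t. max B 0 * real t powr (-(1 + 2*e))"])
  show "summable (\<lambda>t. max B 0 * real t powr (-(1 + 2*e)))"
    by (rule summable_mult) (simp add: summable_real_powr_iff e)
  show "0 \<le> max B 0 * real t powr (-(1 + 2*e))" for t by simp
  fix t :: nat assume t1: "1 \<le> t"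
  have tp: "0 < real t" using t1 by simp
  define c where "c = real t powr (-(1 + 2*e))"
  have c0: "0 < c" unfolding c_def using tp by simp
  have sub: "{\<omega>\<in>space M. real t powr (1/2 + e) < f t \<omega>} \<subseteq> {\<omega>\<in>space M. 1 \<le> ennreal c * ennreal ((f t \<omega>)\<^sup>2)}"
  proof safe
    fix \<omega> assume \<omega>: "\<omega> \<in> space M" and lt: "real t powr (1/2 + e) < f t \<omega>"
    have p0: "0 \<le> real t powr (1/2 + e)" by simp
    have "(real t powr (1/2 + e))\<^sup>2 < (f t \<omega>)\<^sup>2" using lt p0 by (intro power_strict_mono) auto
    moreover have "(real t powr (1/2 + e))\<^sup>2 = real t powr (1 + 2*e)"
      using tp by (simp add: powr_powr[symmetric] power2_eq_square powr_add[symmetric])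
    ultimately have "real t powr (1 + 2*e) < (f t \<omega>)\<^sup>2" by simp
    moreover have "c = 1 / real t powr (1 + 2*e)" unfolding c_def by (simp only: powr_minus divide_inverse mult_1_left)
    moreover have "0 < real t powr (1 + 2*e)" using tp by simp
    ultimately have "1 \<le> c * (f t \<omega>)\<^sup>2" by (simp add: le_divide_eq)
    then show "1 \<le> ennreal c * ennreal ((f t \<omega>)\<^sup>2)" using c0 by (simp add: ennreal_mult[symmetric])
  qed
  have "emeasure M {\<omega>\<in>space M. real t powr (1/2 + e) < f t \<omega>} \<le> emeasure M {\<omega>\<in>space M. 1 \<le> ennreal c * ennreal ((f t \<omega>)\<^sup>2)}"
    by (rule emeasure_mono[OF sub]) (use meas[of t] in measurable)
  also have "\<dots> \<le> ennreal c * (\<integral>\<^sup>+\<omega>. ennreal ((f t \<omega>)\<^sup>2) * indicator (space M) \<omega> \<partial>M)"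
    by (rule nn_integral_Markov_inequality) (use meas[of t] in auto)
  also have "(\<integral>\<^sup>+\<omega>. ennreal ((f t \<omega>)\<^sup>2) * indicator (space M) \<omega> \<partial>M) = (\<integral>\<^sup>+\<omega>. ennreal ((f t \<omega>)\<^sup>2) \<partial>M)"
    by (rule nn_integral_cong) auto
  also have "ennreal c * \<dots> \<le> ennreal c * ennreal B" by (rule mult_left_mono[OF mom]) simp
  also have "\<dots> \<le> ennreal (max B 0 * c)" using c0
    by (cases "B \<ge> 0") (auto simp: ennreal_mult[symmetric] mult.commute ennreal_neg)
  finally show "emeasure M {\<omega>\<in>space M. real t powr (1/2 + e) < f t \<omega>} \<le> ennreal (max B 0 * real t powr (-(1 + 2*e)))"
    unfolding c_def .
qed

lemma exp_bound:
  fixes f :: "nat \<Rightarrow> 'a \<Rightarrow> real"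
  assumes P: "prob_space M" and meas: "\<And>t. f t \<in> borel_measurable M"
    and mom: "\<And>t. (\<integral>\<^sup>+\<omega>. ennreal (exp (f t \<omega>)) \<partial>M) \<le> ennreal C"
  shows "AE \<omega> in M. eventually (\<lambda>t. f t \<omega> \<le> 2 * ln (real t)) sequentially"
proof (rule AE_eventually_le[OF P meas, where Tz = 1 and bd = "\<lambda>t. max C 0 * real t powr (-2)"])
  show "summable (\<lambda>t. max C 0 * real t powr (-2))"
    by (rule summable_mult) (simp add: summable_real_powr_iff)
  show "0 \<le> max C 0 * real t powr (-2)" for t by simp
  fix t :: nat assume t1: "1 \<le> t"
  have tp: "0 < real t" using t1 by simp
  have "emeasure M {\<omega>\<in>space M. 2 * ln (real t) < f t \<omega>} \<le> emeasure M {\<omega>\<in>space M. f t \<omega> \<ge> 2 * ln (real t)}"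
    by (rule emeasure_mono) (use meas[of t] in \<open>auto\<close>)
  also have "\<dots> \<le> ennreal (exp (-1 * (2 * ln (real t)))) * (\<integral>\<^sup>+\<omega>. ennreal (exp (1 * f t \<omega>)) * indicator (space M) \<omega> \<partial>M)"
    by (rule Chernoff_ineq_nn_integral_ge) (use meas[of t] in auto)
  also have "(\<integral>\<^sup>+\<omega>. ennreal (exp (1 * f t \<omega>)) * indicator (space M) \<omega> \<partial>M) = (\<integral>\<^sup>+\<omega>. ennreal (exp (f t \<omega>)) \<partial>M)"
    by (rule nn_integral_cong) auto
  also have "exp (-1 * (2 * ln (real t))) = real t powr (-2)"
    using tp by (simp add: powr_def)
  also have "ennreal (real t powr (-2)) * (\<integral>\<^sup>+\<omega>. ennreal (exp (f t \<omega>)) \<partial>M) \<le> ennreal (real t powr (-2)) * ennreal C"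
    by (rule mult_left_mono[OF mom]) simp
  also have "\<dots> \<le> ennreal (max C 0 * real t powr (-2))"
    by (cases "C \<ge> 0") (auto simp: ennreal_mult[symmetric] mult.commute ennreal_neg)
  finally show "emeasure M {\<omega>\<in>space M. 2 * ln (real t) < f t \<omega>} \<le> ennreal (max C 0 * real t powr (-2))" .
qed

lemma Basis_cart_real: "(Basis :: (real^'d) set) = range (\<lambda>i. axis i 1)"
  by (auto simp: Basis_vec_def)

lemma prod_Basis_cart:
  fixes h :: "real \<Rightarrow> 'b::comm_monoid_mult"
  shows "(\<Prod>i\<in>UNIV. h ((x::real^'d) $ i)) = (\<Prod>b\<in>Basis. h (x \<bullet> b))"
proof -
  have inj: "inj (\<lambda>i::'d. axis i (1::real))" by (auto simp: inj_def axis_eq_axis)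
  have "(\<Prod>b\<in>Basis. h (x \<bullet> b)) = (\<Prod>i\<in>UNIV. h (x \<bullet> axis i 1))"
    unfolding Basis_cart_real by (subst prod.reindex[OF inj]) simp
  also have "\<dots> = (\<Prod>i\<in>UNIV. h (x $ i))" by (simp add: inner_axis)
  finally show ?thesis by simp
qed

lemma std_normal_exp_bound:
  "std_normal_density y * exp \<bar>y\<bar> \<le> (exp 1 * sqrt (4 * pi) / sqrt (2 * pi)) * normal_density 0 (sqrt 2) y"
proof -
  have e: "exp (- y\<^sup>2 / 2) * exp \<bar>y\<bar> \<le> exp 1 * exp (- y\<^sup>2 / 4)"
  proof -
    have "- y\<^sup>2 / 2 + \<bar>y\<bar> \<le> 1 + - y\<^sup>2 / 4"
    proof -
      have "0 \<le> (\<bar>y\<bar> / 2 - 1)\<^sup>2" by simp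
      moreover have "(\<bar>y\<bar> / 2 - 1)\<^sup>2 = y\<^sup>2 / 4 - \<bar>y\<bar> + 1"
        by (simp add: power2_eq_square algebra_simps)
      ultimately show ?thesis by simp
    qed
    then show ?thesis by (simp add: exp_add[symmetric])
  qed
  have nd: "normal_density 0 (sqrt 2) y = 1 / sqrt (4 * pi) * exp (- y\<^sup>2 / 4)"
    by (simp add: normal_density_def)
  have "std_normal_density y * exp \<bar>y\<bar> = 1 / sqrt (2 * pi) * (exp (- y\<^sup>2 / 2) * exp \<bar>y\<bar>)"
    by (simp add: std_normal_density_def)
  also have "\<dots> \<le> 1 / sqrt (2 * pi) * (exp 1 * exp (- y\<^sup>2 / 4))"
    by (rule mult_left_mono[OF e]) simp
  also have "\<dots> = (exp 1 * sqrt (4 * pi) / sqrt (2 * pi)) * (1 / sqrt (4 * pi) * exp (- y\<^sup>2 / 4))"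
    by (simp add: field_simps)
  finally show ?thesis unfolding nd .
qed

lemma nn_integral_normal_density: "(\<integral>\<^sup>+y. ennreal (normal_density 0 (sqrt 2) y) \<partial>lborel) = 1"
proof -
  have p: "0 < sqrt (2::real)" by simp
  show ?thesis
    by (subst nn_integral_eq_integral) (auto simp: integrable_normal_density[OF p] integral_normal_density[OF p])
qed

lemma gauss_exp_finite:
  "(\<integral>\<^sup>+x. ennreal (exp (norm x)) \<partial>(std_gaussian :: (real^'d) measure)) < \<infinity>"
proof -
  define F where "F y = std_normal_density y * exp \<bar>y\<bar>" for y
  define Kc where "Kc = exp 1 * sqrt (4 * pi) / sqrt (2 * pi)"
  have F0: "0 \<le> F y" for y unfolding F_def by simp
  have Fm[measurable]: "F \<in> borel_measurable borel" unfolding F_def by measurable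
  have intF: "(\<integral>\<^sup>+y. ennreal (F y) \<partial>lborel) < \<infinity>"
  proof -
    have "(\<integral>\<^sup>+y. ennreal (F y) \<partial>lborel) \<le> (\<integral>\<^sup>+y. ennreal Kc * ennreal (normal_density 0 (sqrt 2) y) \<partial>lborel)"
    proof (rule nn_integral_mono)
      fix y
      have "F y \<le> Kc * normal_density 0 (sqrt 2) y" unfolding F_def Kc_def by (rule std_normal_exp_bound)
      moreover have "0 \<le> Kc" unfolding Kc_def by simp
      ultimately show "ennreal (F y) \<le> ennreal Kc * ennreal (normal_density 0 (sqrt 2) y)"
        by (simp add: ennreal_mult[symmetric] ennreal_leI)
    qed
    also have "\<dots> = ennreal Kc * 1"
      by (subst nn_integral_cmult) (auto simp: nn_integral_normal_density)
    finally show ?thesis by (simp add: le_less_trans)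
  qed
  have "(\<integral>\<^sup>+x. ennreal (exp (norm x)) \<partial>(std_gaussian :: (real^'d) measure))
      = (\<integral>\<^sup>+x. ennreal (\<Prod>i\<in>UNIV. std_normal_density ((x::real^'d) $ i)) * ennreal (exp (norm x)) \<partial>lborel)"
    unfolding std_gaussian_def by (subst nn_integral_density) auto
  also have "\<dots> \<le> (\<integral>\<^sup>+x. (\<Prod>b\<in>Basis. ennreal (F ((x::real^'d) \<bullet> b))) \<partial>lborel)"
  proof (rule nn_integral_mono)
    fix x :: "real^'d"
    have "exp (norm x) \<le> exp (\<Sum>i\<in>UNIV. \<bar>x$i\<bar>)" using norm_le_l1_cart[of x] by simp
    also have "\<dots> = (\<Prod>i\<in>UNIV. exp \<bar>x$i\<bar>)" by (simp add: exp_sum)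
    finally have "(\<Prod>i\<in>UNIV. std_normal_density (x $ i)) * exp (norm x) \<le> (\<Prod>i\<in>UNIV. std_normal_density (x $ i)) * (\<Prod>i\<in>UNIV. exp \<bar>x$i\<bar>)"
      by (intro mult_left_mono) (auto intro: prod_nonneg)
    also have "\<dots> = (\<Prod>i\<in>UNIV. F (x $ i))" by (simp add: F_def prod.distrib)
    also have "\<dots> = (\<Prod>b\<in>Basis. F (x \<bullet> b))" by (rule prod_Basis_cart)
    finally have "ennreal ((\<Prod>i\<in>UNIV. std_normal_density (x $ i)) * exp (norm x)) \<le> ennreal (\<Prod>b\<in>Basis. F (x \<bullet> b))"
      by (rule ennreal_leI)
    then show "ennreal (\<Prod>i\<in>UNIV. std_normal_density (x $ i)) * ennreal (exp (norm x)) \<le> (\<Prod>b\<in>Basis. ennreal (F (x \<bullet> b)))"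
      by (simp add: ennreal_mult[symmetric] prod_ennreal F0 prod_nonneg)
  qed
  also have "\<dots> = (\<Prod>b\<in>(Basis::(real^'d) set). \<integral>\<^sup>+y. ennreal (F y) \<partial>lborel)"
    by (rule nn_integral_lborel_prod) auto
  also have "\<dots> < \<infinity>"
    using intF by (simp add: power_less_top_ennreal)
  finally show ?thesis .
qed

definition ghat :: "('n::finite \<Rightarrow> real^'d \<Rightarrow> real^'d) \<Rightarrow> real^'d^'n \<Rightarrow> real^'d^'n" where
  "ghat g z = (\<chi> n. g n (z $ n))"

lemma norm_LK_le: assumes "undirected_graph E"
  shows "norm (LK E (v::real^'d^'n::finite)) \<le> 2 * real CARD('n) * norm v"
proof -
  have "(norm (LK E v))\<^sup>2 \<le> real CARD('n) * Qf E v" by (rule norm_LK_sq[OF assms])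
  also have "\<dots> \<le> real CARD('n) * (4 * real CARD('n) * (norm v)\<^sup>2)"
    by (intro mult_left_mono Qf_le) simp
  also have "\<dots> = (2 * real CARD('n) * norm v)\<^sup>2" by (simp add: power2_eq_square)
  finally show ?thesis by (rule power2_le_imp_le) simp
qed

lemma ghat_bound:
  assumes lip: "\<And>n. K-lipschitz_on UNIV (g n)" and K: "0 \<le> K"
  shows "norm (ghat g z) \<le> K * norm z + norm (ghat g 0)"
proof -
  have "norm (ghat g z - ghat g 0) \<le> norm (K *\<^sub>R z)"
  proof (rule norm_le_componentwise_cart)
    fix n
    have "norm (g n (z $ n) - g n 0) \<le> K * norm (z $ n)"
      using lipschitz_onD[OF lip[of n], of "z $ n" 0] by (simp add: dist_norm)
    then show "norm ((ghat g z - ghat g 0) $ n) \<le> norm ((K *\<^sub>R z) $ n)"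
      using K by (simp add: ghat_def)
  qed
  then have "norm (ghat g z - ghat g 0) \<le> K * norm z" using K by simp
  then show ?thesis using norm_triangle_ineq2[of "ghat g z" "ghat g 0"] by simp
qed

lemma node_dissip:
  fixes y :: "real^'d" and gn :: "real^'d \<Rightarrow> real^'d"
  assumes gb: "norm (gn y) \<le> K * norm y + gm" and inn: "norm y \<ge> C1 \<Longrightarrow> inner y (gn y) \<ge> 0"
    and a: "0 \<le> a" and K: "0 \<le> K" and gm: "0 \<le> gm" and C1: "0 \<le> C1"
  shows "norm (y - a *\<^sub>R gn y) \<le> (1 + a\<^sup>2 * K\<^sup>2) * norm y + a * (K * C1 + 2 * gm)"
proof (cases "norm y \<ge> C1")
  case True
  have "(norm (y - a *\<^sub>R gn y))\<^sup>2 = (norm y)\<^sup>2 - 2 * a * inner y (gn y) + a\<^sup>2 * (norm (gn y))\<^sup>2"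
    by (simp only: power2_norm_eq_inner inner_diff_left inner_diff_right inner_scaleR_left inner_scaleR_right inner_commute[of "gn y" y])
       (simp add: power2_eq_square algebra_simps)
  also have "\<dots> \<le> (norm y)\<^sup>2 + a\<^sup>2 * (K * norm y + gm)\<^sup>2"
  proof -
    have "0 \<le> 2 * a * inner y (gn y)" using inn[OF True] a by simp
    moreover have "(norm (gn y))\<^sup>2 \<le> (K * norm y + gm)\<^sup>2" using gb by (intro power_mono) auto
    then have "a\<^sup>2 * (norm (gn y))\<^sup>2 \<le> a\<^sup>2 * (K * norm y + gm)\<^sup>2" by (intro mult_left_mono) auto
    ultimately show ?thesis by linarith
  qed
  also have "\<dots> \<le> ((1 + a\<^sup>2 * K\<^sup>2) * norm y + a * (2 * gm))\<^sup>2"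
  proof -
    define r where "r = norm y"
    have r0: "0 \<le> r" unfolding r_def by simp
    have "(K * r + gm)\<^sup>2 \<le> 2 * K\<^sup>2 * r\<^sup>2 + 2 * gm\<^sup>2"
      using zero_le_power2[of "K * r - gm"] by (simp add: power2_eq_square algebra_simps)
    then have "r\<^sup>2 + a\<^sup>2 * (K * r + gm)\<^sup>2 \<le> r\<^sup>2 + a\<^sup>2 * (2 * K\<^sup>2 * r\<^sup>2 + 2 * gm\<^sup>2)"
      by (intro add_left_mono mult_left_mono) auto
    also have "\<dots> \<le> ((1 + a\<^sup>2 * K\<^sup>2) * r + a * (2 * gm))\<^sup>2"
    proof -
      have "0 \<le> (a\<^sup>2 * K\<^sup>2)\<^sup>2 * r\<^sup>2 + 4 * a * gm * (1 + a\<^sup>2 * K\<^sup>2) * r + 2 * a\<^sup>2 * gm\<^sup>2"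
        using a gm r0 K by (intro add_nonneg_nonneg mult_nonneg_nonneg) auto
      then show ?thesis by (simp add: power2_eq_square algebra_simps)
    qed
    finally show ?thesis unfolding r_def .
  qed
  finally have "norm (y - a *\<^sub>R gn y) \<le> (1 + a\<^sup>2 * K\<^sup>2) * norm y + a * (2 * gm)"
    by (rule power2_le_imp_le) (use a gm in simp)
  also have "\<dots> \<le> (1 + a\<^sup>2 * K\<^sup>2) * norm y + a * (K * C1 + 2 * gm)"
    using a K C1 by (intro add_left_mono mult_left_mono) auto
  finally show ?thesis .
next
  case False
  have "norm (y - a *\<^sub>R gn y) \<le> norm y + a * norm (gn y)"
    using norm_triangle_ineq4[of y "a *\<^sub>R gn y"] a by simp
  also have "\<dots> \<le> norm y + a * (K * C1 + gm)"
  proof -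
    have "K * norm y \<le> K * C1" using False K by (intro mult_left_mono) auto
    then have "norm (gn y) \<le> K * C1 + gm" using gb by simp
    then show ?thesis using a by (intro add_left_mono mult_left_mono) auto
  qed
  also have "\<dots> \<le> (1 + a\<^sup>2 * K\<^sup>2) * norm y + a * (K * C1 + 2 * gm)"
  proof -
    have "norm y \<le> (1 + a\<^sup>2 * K\<^sup>2) * norm y" by (simp add: algebra_simps)
    moreover have "a * (K * C1 + gm) \<le> a * (K * C1 + 2 * gm)" using a gm by (intro mult_left_mono) auto
    ultimately show ?thesis by simp
  qed
  finally show ?thesis .
qed

lemma vec_dissip:
  fixes g :: "'n::finite \<Rightarrow> real^'d \<Rightarrow> real^'d"
  assumes lip: "\<And>n. K-lipschitz_on UNIV (g n)" and K: "0 \<le> K" and C1: "0 \<le> C1"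
    and inn: "\<And>n y. norm y \<ge> C1 \<Longrightarrow> inner y (g n y) \<ge> 0" and a: "0 \<le> a"
  shows "norm (z - a *\<^sub>R ghat g z) \<le> (1 + a\<^sup>2 * K\<^sup>2) * norm z
           + a * ((K * C1 + 2 * (\<Sum>m\<in>UNIV. norm (g m 0))) * norm (\<chi> n::'n. (1::real)))"
proof -
  define gm where "gm = (\<Sum>m\<in>UNIV. norm (g m 0))"
  define Cn where "Cn = K * C1 + 2 * gm"
  have gm0: "0 \<le> gm" unfolding gm_def by (simp add: sum_nonneg)
  have Cn0: "0 \<le> Cn" unfolding Cn_def using K C1 gm0 by simp
  define r :: "real^'n" where "r = (\<chi> n. norm (z $ n))"
  define one :: "real^'n" where "one = (\<chi> n. 1)"
  have nr: "norm r = norm z" unfolding r_def by (simp add: norm_vec_def)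
  have comp: "norm ((z - a *\<^sub>R ghat g z) $ n) \<le> norm (((1 + a\<^sup>2 * K\<^sup>2) *\<^sub>R r + (a * Cn) *\<^sub>R one) $ n)" for n
  proof -
    have gmn: "norm (g n 0) \<le> gm" unfolding gm_def by (rule member_le_sum) auto
    have gb: "norm (g n (z $ n)) \<le> K * norm (z $ n) + gm"
    proof -
      have "norm (g n (z $ n) - g n 0) \<le> K * norm (z $ n)"
        using lipschitz_onD[OF lip[of n], of "z $ n" 0] by (simp add: dist_norm)
      then show ?thesis using norm_triangle_ineq2[of "g n (z $ n)" "g n 0"] gmn by simp
    qed
    have "norm ((z - a *\<^sub>R ghat g z) $ n) = norm (z $ n - a *\<^sub>R g n (z $ n))" by (simp add: ghat_def)
    also have "\<dots> \<le> (1 + a\<^sup>2 * K\<^sup>2) * norm (z $ n) + a * Cn"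
      unfolding Cn_def by (rule node_dissip[where gn = "g n", OF gb inn[of "z $ n" n] a K gm0 C1])
    also have "\<dots> = norm (((1 + a\<^sup>2 * K\<^sup>2) *\<^sub>R r + (a * Cn) *\<^sub>R one) $ n)"
      using a Cn0 by (simp add: r_def one_def)
    finally show ?thesis .
  qed
  have "norm (z - a *\<^sub>R ghat g z) \<le> norm ((1 + a\<^sup>2 * K\<^sup>2) *\<^sub>R r + (a * Cn) *\<^sub>R one)"
    by (rule norm_le_componentwise_cart) (rule comp)
  also have "\<dots> \<le> (1 + a\<^sup>2 * K\<^sup>2) * norm r + a * Cn * norm one"
    using norm_triangle_ineq[of "(1 + a\<^sup>2 * K\<^sup>2) *\<^sub>R r" "(a * Cn) *\<^sub>R one"] a Cn0 by simp
  finally show ?thesis unfolding nr one_def Cn_def gm_def by (simp add: mult.assoc)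
qed

lemma step_x:
  fixes g :: "'n::finite \<Rightarrow> real^'d \<Rightarrow> real^'d"
  assumes und: "undirected_graph E" and lip: "\<And>n. K-lipschitz_on UNIV (g n)" and K: "0 \<le> K" and C1: "0 \<le> C1"
    and inn: "\<And>n y. norm y \<ge> C1 \<Longrightarrow> inner y (g n y) \<ge> 0"
    and a: "0 \<le> a" and b: "0 \<le> b" "b * real CARD('n) \<le> 1/2" and c: "0 \<le> c"
    and xn: "xn = z - b *\<^sub>R LK E z - a *\<^sub>R (ghat g z + xi) + c *\<^sub>R wv"
  shows "norm xn \<le> (1 + (a\<^sup>2 * K\<^sup>2 + 2 * real CARD('n) * K * (a * b))) * norm z
     + a * ((K * C1 + 2 * (\<Sum>m\<in>UNIV. norm (g m 0))) * norm (\<chi> n::'n. (1::real)) + 2 * real CARD('n) * norm (ghat g 0))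
     + a * norm xi + c * norm wv"
proof -
  define N where "N = real CARD('n)"
  define Cd where "Cd = (K * C1 + 2 * (\<Sum>m\<in>UNIV. norm (g m 0))) * norm (\<chi> n::'n. (1::real))"
  define G0 where "G0 = norm (ghat g 0)"
  define y where "y = z - a *\<^sub>R ghat g z"
  have N1: "1 \<le> N" unfolding N_def by simp
  have "b * 1 \<le> b * N" using b N1 by (intro mult_left_mono) auto
  then have b1: "b \<le> 1" using b unfolding N_def by simp
  have G00: "0 \<le> G0" unfolding G0_def by simp
  have eq: "xn = (y - b *\<^sub>R LK E y) - (a * b) *\<^sub>R LK E (ghat g z) - a *\<^sub>R xi + c *\<^sub>R wv"
    unfolding xn y_def by (simp add: LK_diff LK_scale algebra_simps)
  have "norm xn \<le> norm (y - b *\<^sub>R LK E y) + norm ((a * b) *\<^sub>R LK E (ghat g z)) + norm (a *\<^sub>R xi) + norm (c *\<^sub>R wv)"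
    unfolding eq by (intro order.trans[OF norm_triangle_ineq] order.trans[OF norm_triangle_ineq4] add_mono order.refl norm_triangle_ineq4)
  also have "\<dots> = norm (y - b *\<^sub>R LK E y) + a * b * norm (LK E (ghat g z)) + a * norm xi + c * norm wv"
    using a b c by simp
  also have "norm (y - b *\<^sub>R LK E y) \<le> (1 + a\<^sup>2 * K\<^sup>2) * norm z + a * Cd"
  proof -
    have vd: "norm (z - a *\<^sub>R ghat g z) \<le> (1 + a\<^sup>2 * K\<^sup>2) * norm z + a * Cd"
      unfolding Cd_def using lip K C1 inn a by (rule vec_dissip)
    show ?thesis using LK_nonexp[OF und b, of y] vd unfolding y_def by linarith
  qed
  also have "a * b * norm (LK E (ghat g z)) \<le> a * b * (2 * N * (K * norm z + G0))"
  proof -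
    have "norm (LK E (ghat g z)) \<le> 2 * N * norm (ghat g z)" unfolding N_def by (rule norm_LK_le[OF und])
    also have "\<dots> \<le> 2 * N * (K * norm z + G0)" unfolding G0_def
      using ghat_bound[OF lip K, where z = z] N1 by (intro mult_left_mono) auto
    finally show ?thesis using a b by (intro mult_left_mono) auto
  qed
  also have "a * b * (2 * N * (K * norm z + G0)) \<le> 2 * N * K * (a * b) * norm z + a * (2 * N * G0)"
  proof -
    have "b * (2 * N * G0) \<le> 2 * N * G0" using b1 b N1 G00 by (intro mult_left_le_one_le) auto
    then have "a * (b * (2 * N * G0)) \<le> a * (2 * N * G0)" using a by (intro mult_left_mono) auto
    then have "a * b * (2 * N * G0) \<le> a * (2 * N * G0)" by (simp add: mult.assoc)
    then show ?thesis by (simp add: algebra_simps)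
  qed
  finally show ?thesis unfolding N_def Cd_def G0_def by (simp add: algebra_simps)
qed

lemma step_e:
  fixes g :: "'n::finite \<Rightarrow> real^'d \<Rightarrow> real^'d"
  assumes und: "undirected_graph E" and gap: "\<And>y::real^'d^'n. (\<Sum>n\<in>UNIV. y$n) = 0 \<Longrightarrow> \<mu> * (norm y)\<^sup>2 \<le> Qf E y"
    and mu: "0 \<le> \<mu>" and lip: "\<And>n. K-lipschitz_on UNIV (g n)" and K: "0 \<le> K"
    and a: "0 \<le> a" and b: "0 \<le> b" "b * real CARD('n) \<le> 1/2" "b * \<mu> \<le> 1" and c: "0 \<le> c"
    and xn: "xn = z - b *\<^sub>R LK E z - a *\<^sub>R (ghat g z + xi) + c *\<^sub>R wv"
  shows "norm (Pr xn) \<le> (1 - b * \<mu> / 4) * norm (Pr z) + a * (K * norm z + norm (ghat g 0)) + a * norm xi + c * norm wv"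
proof -
  have eq: "Pr xn = (Pr z - b *\<^sub>R LK E (Pr z)) - a *\<^sub>R Pr (ghat g z + xi) + c *\<^sub>R Pr wv"
    unfolding xn by (simp add: Pr_add Pr_diff Pr_scale Pr_LK[OF und])
  have "norm (Pr xn) \<le> norm (Pr z - b *\<^sub>R LK E (Pr z)) + norm (a *\<^sub>R Pr (ghat g z + xi)) + norm (c *\<^sub>R Pr wv)"
    unfolding eq by (intro order.trans[OF norm_triangle_ineq] order.trans[OF norm_triangle_ineq4] add_mono order.refl)
  also have "\<dots> = norm (Pr z - b *\<^sub>R LK E (Pr z)) + a * norm (Pr (ghat g z + xi)) + c * norm (Pr wv)"
    using a c by simp
  also have "norm (Pr z - b *\<^sub>R LK E (Pr z)) \<le> (1 - b * \<mu> / 4) * norm (Pr z)"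
    by (rule LK_contr[OF und b mu gap[OF Pr_sum]])
  also have "a * norm (Pr (ghat g z + xi)) \<le> a * (K * norm z + norm (ghat g 0)) + a * norm xi"
  proof -
    have "norm (Pr (ghat g z + xi)) \<le> norm (ghat g z + xi)" by (rule norm_Pr)
    also have "\<dots> \<le> norm (ghat g z) + norm xi" by (rule norm_triangle_ineq)
    also have "\<dots> \<le> K * norm z + norm (ghat g 0) + norm xi" using ghat_bound[OF lip K, where z = z] by simp
    finally show ?thesis using a by (simp add: mult_left_mono distrib_left[symmetric])
  qed
  also have "c * norm (Pr wv) \<le> c * norm wv" using c norm_Pr[of wv] by (intro mult_left_mono) auto
  finally show ?thesis by simp
qed

lemma det_main:
  fixes g :: "'n::finite \<Rightarrow> real^'d \<Rightarrow> real^'d" and x \<xi> w :: "nat \<Rightarrow> real^'d^'n"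
    and \<alpha> \<beta> \<gamma> :: "nat \<Rightarrow> real"
  assumes und: "undirected_graph E" and con: "connected_graph E"
    and K: "0 \<le> K" and lip: "\<And>n. K-lipschitz_on UNIV (g n)" and C1: "0 \<le> C1"
    and inn: "\<And>n y. norm y \<ge> C1 \<Longrightarrow> inner y (g n y) \<ge> 0"
    and rec: "\<And>t. x (Suc t) = x t - \<beta> t *\<^sub>R LK E (x t) - \<alpha> t *\<^sub>R (ghat g (x t) + \<xi> t) + \<gamma> t *\<^sub>R w t"
    and ca: "0 < ca" and cb: "0 < cb" and cg: "0 < cg" and tb: "0 < tb" "tb < 1/2"
    and steps: "eventually (\<lambda>t. \<alpha> t = ca / real t \<and> \<beta> t = cb / real t powr tb
        \<and> \<gamma> t = cg / (sqrt (real t) * sqrt (ln (ln (real t))))) sequentially"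
    and e: "0 < \<epsilon>" and tau: "0 \<le> \<tau>" "\<tau> < 1/2 - tb - \<epsilon>"
    and xib: "eventually (\<lambda>t. norm (\<xi> t) \<le> real t powr (1/2 + \<epsilon>)) sequentially"
    and wb: "eventually (\<lambda>t. norm (w t) \<le> Cw * ln (real t)) sequentially" and Cw: "0 \<le> Cw"
  shows "(\<lambda>t. real t powr \<tau> * norm (Pr (x t))) \<longlonglongrightarrow> 0"
proof -
  obtain \<mu> where mu: "\<mu> > 0" and gap: "\<And>y::real^'d^'n. (\<Sum>n\<in>UNIV. y$n) = 0 \<Longrightarrow> \<mu> * (norm y)\<^sup>2 \<le> Qf E y"
    using spectral_gap[OF con] by blast
  define N where "N = real CARD('n)"
  have N1: "1 \<le> N" unfolding N_def by simp
  define bmax where "bmax = min (1 / (2 * N)) (1 / \<mu>)"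
  have bmax: "0 < bmax" unfolding bmax_def using N1 mu by simp
  have limb: "(\<lambda>t. real t powr (-tb)) \<longlonglongrightarrow> 0"
    by (rule tendsto_neg_powr[OF _ filterlim_real_sequentially]) (use tb in simp)
  have evb: "eventually (\<lambda>t. real t powr (-tb) < bmax / cb) sequentially"
    using order_tendstoD(2)[OF limb] bmax cb by simp
  have evl: "eventually (\<lambda>t. 1 \<le> ln (ln (real t))) sequentially"
  proof -
    have "filterlim (\<lambda>t. ln (ln (real t))) at_top sequentially"
      by (rule filterlim_compose[OF ln_at_top filterlim_compose[OF ln_at_top filterlim_real_sequentially]])
    then show ?thesis by (simp add: filterlim_at_top)
  qed
  have ev1: "eventually (\<lambda>t. (1::nat) \<le> t) sequentially" by (rule eventually_ge_at_top)
  obtain T0 where T0: "\<And>t. t \<ge> T0 \<Longrightarrow> (\<alpha> t = ca / real t \<and> \<beta> t = cb / real t powr tb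
        \<and> \<gamma> t = cg / (sqrt (real t) * sqrt (ln (ln (real t))))) \<and> real t powr (-tb) < bmax / cb
        \<and> 1 \<le> ln (ln (real t)) \<and> 1 \<le> t \<and> norm (\<xi> t) \<le> real t powr (1/2 + \<epsilon>) \<and> norm (w t) \<le> Cw * ln (real t)"
    using eventually_conj[OF steps eventually_conj[OF evb eventually_conj[OF evl eventually_conj[OF ev1 eventually_conj[OF xib wb]]]]]
    unfolding eventually_sequentially by blast
  have T01: "1 \<le> T0" using T0[of T0] by simp
  define G0 where "G0 = norm (ghat g 0)"
  define Cx0 where "Cx0 = (K * C1 + 2 * (\<Sum>m\<in>UNIV. norm (g m 0))) * norm (\<chi> n::'n. (1::real)) + 2 * real CARD('n) * norm (ghat g 0)"
  have G00: "0 \<le> G0" unfolding G0_def by simp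
  have Cx00: "0 \<le> Cx0" unfolding Cx0_def using K C1 by (intro add_nonneg_nonneg mult_nonneg_nonneg) (auto intro: sum_nonneg)
  have basic: "0 < real t \<and> 1 \<le> real t \<and> 0 \<le> \<alpha> t \<and> 0 \<le> \<beta> t \<and> \<beta> t * N \<le> 1/2 \<and> \<beta> t * \<mu> \<le> 1 \<and> 0 \<le> \<gamma> t
      \<and> \<beta> t = cb * real t powr (-tb)
      \<and> \<alpha> t \<le> ca * real t powr (\<epsilon> - 1/2)
      \<and> \<alpha> t * norm (\<xi> t) \<le> ca * real t powr (\<epsilon> - 1/2)
      \<and> \<gamma> t * norm (w t) \<le> cg * Cw / \<epsilon> * real t powr (\<epsilon> - 1/2)
      \<and> \<alpha> t * (K * (max Cx 0 * real t powr (1/2 + \<epsilon>)) + G0) \<le> (ca * K * max Cx 0 + ca * G0) * real t powr (\<epsilon> - 1/2)"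
    if tT: "t \<ge> T0" for t Cx
  proof -
    note TT = T0[OF tT]
    have t1: "1 \<le> real t" using TT by simp
    have tp: "0 < real t" using t1 by simp
    have aeq: "\<alpha> t = ca / real t" and beq0: "\<beta> t = cb / real t powr tb"
      and geq: "\<gamma> t = cg / (sqrt (real t) * sqrt (ln (ln (real t))))" using TT by auto
    have beq: "\<beta> t = cb * real t powr (-tb)" using beq0 by (simp add: powr_minus_divide)
    have bsmall: "\<beta> t < bmax"
    proof -
      have "cb * real t powr (-tb) < cb * (bmax / cb)" using TT cb by (intro mult_strict_left_mono) auto
      then show ?thesis using beq cb by simp
    qed
    have b0: "0 \<le> \<beta> t" using beq cb by simp
    have bN: "\<beta> t * N \<le> 1/2"
    proof -
      have "\<beta> t \<le> 1 / (2 * N)" using bsmall unfolding bmax_def by simp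
      then show ?thesis using N1 by (simp add: field_simps)
    qed
    have bmu: "\<beta> t * \<mu> \<le> 1"
    proof -
      have "\<beta> t \<le> 1 / \<mu>" using bsmall unfolding bmax_def by simp
      then show ?thesis using mu by (simp add: field_simps)
    qed
    have a0: "0 \<le> \<alpha> t" using aeq ca tp by simp
    have ll: "1 \<le> ln (ln (real t))" using TT by simp
    have g0: "0 \<le> \<gamma> t" using geq cg ll by simp
    have pw1: "real t powr (1/2 + \<epsilon>) / real t = real t powr (\<epsilon> - 1/2)"
    proof -
      have "real t powr (\<epsilon> - 1/2) = real t powr ((1/2 + \<epsilon>) - 1)" by (simp add: algebra_simps)
      also have "\<dots> = real t powr (1/2 + \<epsilon>) / real t powr 1" by (rule powr_diff)
      also have "\<dots> = real t powr (1/2 + \<epsilon>) / real t" using tp by simp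
      finally show ?thesis by simp
    qed
    have pw2: "1 / real t \<le> real t powr (\<epsilon> - 1/2)"
    proof -
      have "real t powr (-1) \<le> real t powr (\<epsilon> - 1/2)" using e t1 by (intro powr_mono) auto
      then show ?thesis using tp by (simp add: powr_minus_divide)
    qed
    have aub: "\<alpha> t \<le> ca * real t powr (\<epsilon> - 1/2)"
      using mult_left_mono[OF pw2, of ca] ca by (simp add: aeq)
    have axi: "\<alpha> t * norm (\<xi> t) \<le> ca * real t powr (\<epsilon> - 1/2)"
    proof -
      have "\<alpha> t * norm (\<xi> t) \<le> \<alpha> t * real t powr (1/2 + \<epsilon>)" using TT a0 by (intro mult_left_mono) auto
      also have "\<dots> = ca * (real t powr (1/2 + \<epsilon>) / real t)" by (simp add: aeq)
      finally show ?thesis unfolding pw1 .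
    qed
    have gw: "\<gamma> t * norm (w t) \<le> cg * Cw / \<epsilon> * real t powr (\<epsilon> - 1/2)"
    proof -
      have gle: "\<gamma> t \<le> cg * real t powr (-1/2)"
      proof -
        have "sqrt (real t) \<le> sqrt (real t) * sqrt (ln (ln (real t)))" using ll tp by simp
        then have "cg / (sqrt (real t) * sqrt (ln (ln (real t)))) \<le> cg / sqrt (real t)"
          using cg tp ll by (intro divide_left_mono) auto
        also have "\<dots> = cg * real t powr (-1/2)" using tp
          by (simp add: powr_minus_divide powr_half_sqrt)
        finally show ?thesis by (simp add: geq)
      qed
      have wle: "norm (w t) \<le> Cw * (real t powr \<epsilon> / \<epsilon>)"
        using TT ln_powr_bound[OF t1 e] Cw by (meson mult_left_mono order.trans)
      have "\<gamma> t * norm (w t) \<le> cg * real t powr (-1/2) * (Cw * (real t powr \<epsilon> / \<epsilon>))"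
        using gle wle g0 by (intro mult_mono) auto
      also have "\<dots> = cg * Cw / \<epsilon> * (real t powr (-1/2) * real t powr \<epsilon>)" by (simp add: algebra_simps)
      also have "real t powr (-1/2) * real t powr \<epsilon> = real t powr (\<epsilon> - 1/2)"
        by (simp add: powr_add[symmetric])
      finally show ?thesis .
    qed
    have ax: "\<alpha> t * (K * (max Cx 0 * real t powr (1/2 + \<epsilon>)) + G0) \<le> (ca * K * max Cx 0 + ca * G0) * real t powr (\<epsilon> - 1/2)"
    proof -
      have "\<alpha> t * (K * (max Cx 0 * real t powr (1/2 + \<epsilon>))) = ca * K * max Cx 0 * (real t powr (1/2 + \<epsilon>) / real t)"
        by (simp add: aeq)
      also have "\<dots> = ca * K * max Cx 0 * real t powr (\<epsilon> - 1/2)" unfolding pw1 ..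
      finally have 1: "\<alpha> t * (K * (max Cx 0 * real t powr (1/2 + \<epsilon>))) = ca * K * max Cx 0 * real t powr (\<epsilon> - 1/2)" .
      have 2: "\<alpha> t * G0 \<le> ca * G0 * real t powr (\<epsilon> - 1/2)"
        using mult_right_mono[OF aub G00] by (simp add: mult_ac)
      have 3: "\<alpha> t * (K * (max Cx 0 * real t powr (1/2 + \<epsilon>)) + G0) = \<alpha> t * (K * (max Cx 0 * real t powr (1/2 + \<epsilon>))) + \<alpha> t * G0"
        by (simp add: distrib_left)
      have 4: "(ca * K * max Cx 0 + ca * G0) * real t powr (\<epsilon> - 1/2) = ca * K * max Cx 0 * real t powr (\<epsilon> - 1/2) + ca * G0 * real t powr (\<epsilon> - 1/2)"
        by (simp add: distrib_right)
      show ?thesis unfolding 3 4 using 1 2 by linarith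
    qed
    show ?thesis using tp t1 a0 b0 bN bmu g0 beq aub axi gw ax by (simp add: N_def mult.commute)
  qed
  define a where "a t = K\<^sup>2 * ca\<^sup>2 * real t powr (-2) + 2 * N * K * ca * cb * real t powr (-(1 + tb))" for t
  have a0: "0 \<le> a t" for t unfolding a_def using K ca cb N1 by (intro add_nonneg_nonneg mult_nonneg_nonneg) auto
  have asum: "summable a" unfolding a_def
    by (intro summable_add summable_mult) (use tb in \<open>simp_all add: summable_real_powr_iff\<close>)
  define Dx where "Dx = ca * Cx0 + ca + cg * Cw / \<epsilon>"
  have Dx0: "0 \<le> Dx" unfolding Dx_def using ca Cx00 cg Cw e by simp
  have xstep: "norm (x (Suc t)) \<le> (1 + a t) * norm (x t) + Dx * real t powr (\<epsilon> - 1/2)" if tT: "t \<ge> T0" for t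
  proof -
    note B = basic[OF tT, of 0]
    note TT = T0[OF tT]
    have tp: "0 < real t" using B by blast
    have a0': "0 \<le> \<alpha> t" using B by blast
    have b0': "0 \<le> \<beta> t" using B by blast
    have bN': "\<beta> t * real CARD('n) \<le> 1/2" using B unfolding N_def by blast
    have g0': "0 \<le> \<gamma> t" using B by blast
    have aub: "\<alpha> t \<le> ca * real t powr (\<epsilon> - 1/2)" using B by blast
    have axi: "\<alpha> t * norm (\<xi> t) \<le> ca * real t powr (\<epsilon> - 1/2)" using B by blast
    have gw: "\<gamma> t * norm (w t) \<le> cg * Cw / \<epsilon> * real t powr (\<epsilon> - 1/2)" using B by blast
    have aeq0: "\<alpha> t = ca / real t" and beq0: "\<beta> t = cb / real t powr tb" using TT by blast+
    have sx: "norm (x (Suc t)) \<le> (1 + ((\<alpha> t)\<^sup>2 * K\<^sup>2 + 2 * real CARD('n) * K * (\<alpha> t * \<beta> t))) * norm (x t)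
       + \<alpha> t * ((K * C1 + 2 * (\<Sum>m\<in>UNIV. norm (g m 0))) * norm (\<chi> n::'n. (1::real)) + 2 * real CARD('n) * norm (ghat g 0))
       + \<alpha> t * norm (\<xi> t) + \<gamma> t * norm (w t)"
      using und lip K C1 inn a0' b0' bN' g0' rec[of t] by (rule step_x)
    have sq: "real t powr (-2) = 1 / (real t)\<^sup>2" using tp by (simp add: powr_minus_divide powr_numeral)
    have aeq: "(\<alpha> t)\<^sup>2 * K\<^sup>2 + 2 * real CARD('n) * K * (\<alpha> t * \<beta> t) = a t"
    proof -
      have 1: "(\<alpha> t)\<^sup>2 = ca\<^sup>2 * real t powr (-2)" unfolding sq aeq0 by (simp add: power_divide)
      have "\<alpha> t * \<beta> t = ca * cb * (real t powr (-1) * real t powr (-tb))"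
        unfolding aeq0 beq0 using tp by (simp add: powr_minus_divide)
      also have "real t powr (-1) * real t powr (-tb) = real t powr ((-1) + (-tb))"
        by (rule powr_add[symmetric])
      also have "\<dots> = real t powr (-(1 + tb))"
        by (rule arg_cong[where f = "\<lambda>u. real t powr u"]) simp
      finally have 2: "\<alpha> t * \<beta> t = ca * cb * real t powr (-(1 + tb))" .
      show ?thesis unfolding a_def 1 2 N_def by (simp only: mult_ac power_mult_distrib)
    qed
    have "\<alpha> t * Cx0 \<le> ca * real t powr (\<epsilon> - 1/2) * Cx0" using aub Cx00 by (rule mult_right_mono)
    then have c1: "\<alpha> t * Cx0 \<le> ca * Cx0 * real t powr (\<epsilon> - 1/2)" by (simp only: mult_ac)
    have eqDx: "Dx * real t powr (\<epsilon> - 1/2) = ca * Cx0 * real t powr (\<epsilon> - 1/2) + ca * real t powr (\<epsilon> - 1/2) + cg * Cw / \<epsilon> * real t powr (\<epsilon> - 1/2)"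
      unfolding Dx_def by (simp only: distrib_right)
    have "\<alpha> t * Cx0 + \<alpha> t * norm (\<xi> t) + \<gamma> t * norm (w t) \<le> Dx * real t powr (\<epsilon> - 1/2)"
      using c1 axi gw eqDx by linarith
    then show ?thesis using sx unfolding aeq Cx0_def by linarith
  qed
  obtain Cx where Cx: "\<And>t. t \<ge> T0 \<Longrightarrow> norm (x t) \<le> Cx * real t powr (1/2 + \<epsilon>)"
  proof -
    have "\<exists>C. \<forall>t\<ge>T0. norm (x t) \<le> C * real t powr (1/2 + \<epsilon>)"
      by (rule growth_poly[of T0 "\<lambda>t. norm (x t)" a Dx \<epsilon>, OF xstep a0 asum _ Dx0 _ T01]) (use e in auto)
    then show ?thesis using that by blast
  qed
  define De where "De = (ca * K * max Cx 0 + ca * G0) + ca + cg * Cw / \<epsilon>"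
  have De0: "0 \<le> De" unfolding De_def using ca K cg Cw e G00 by (intro add_nonneg_nonneg) auto
  have estep: "norm (Pr (x (Suc t))) \<le> (1 - (\<mu> * cb / 4) * real t powr (-tb)) * norm (Pr (x t)) + De * real t powr (-(1/2 - \<epsilon>))"
    if tT: "t \<ge> T0" for t
  proof -
    note B = basic[OF tT, of Cx]
    have a0': "0 \<le> \<alpha> t" using B by blast
    have b0': "0 \<le> \<beta> t" using B by blast
    have bN': "\<beta> t * real CARD('n) \<le> 1/2" using B unfolding N_def by blast
    have bmu': "\<beta> t * \<mu> \<le> 1" using B by blast
    have g0': "0 \<le> \<gamma> t" using B by blast
    have beq: "\<beta> t = cb * real t powr (-tb)" using B by blast
    have axi: "\<alpha> t * norm (\<xi> t) \<le> ca * real t powr (\<epsilon> - 1/2)" using B by blast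
    have gw: "\<gamma> t * norm (w t) \<le> cg * Cw / \<epsilon> * real t powr (\<epsilon> - 1/2)" using B by blast
    have ax: "\<alpha> t * (K * (max Cx 0 * real t powr (1/2 + \<epsilon>)) + G0) \<le> (ca * K * max Cx 0 + ca * G0) * real t powr (\<epsilon> - 1/2)"
      using B by blast
    have mu0: "0 \<le> \<mu>" using mu by simp
    have se: "norm (Pr (x (Suc t))) \<le> (1 - \<beta> t * \<mu> / 4) * norm (Pr (x t)) + \<alpha> t * (K * norm (x t) + norm (ghat g 0)) + \<alpha> t * norm (\<xi> t) + \<gamma> t * norm (w t)"
      using und gap mu0 lip K a0' b0' bN' bmu' g0' rec[of t] by (rule step_e)
    have "\<alpha> t * (K * norm (x t) + G0) \<le> \<alpha> t * (K * (max Cx 0 * real t powr (1/2 + \<epsilon>)) + G0)"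
    proof -
      have "Cx * real t powr (1/2 + \<epsilon>) \<le> max Cx 0 * real t powr (1/2 + \<epsilon>)"
        by (intro mult_right_mono) auto
      then have "norm (x t) \<le> max Cx 0 * real t powr (1/2 + \<epsilon>)" using Cx[OF tT] by linarith
      then have "K * norm (x t) \<le> K * (max Cx 0 * real t powr (1/2 + \<epsilon>))" using K by (rule mult_left_mono)
      then show ?thesis using a0' by (intro mult_left_mono) auto
    qed
    moreover have eqDe: "De * real t powr (\<epsilon> - 1/2) = (ca * K * max Cx 0 + ca * G0) * real t powr (\<epsilon> - 1/2) + ca * real t powr (\<epsilon> - 1/2) + cg * Cw / \<epsilon> * real t powr (\<epsilon> - 1/2)"
      unfolding De_def by (simp only: distrib_right)
    ultimately have "\<alpha> t * (K * norm (x t) + G0) + \<alpha> t * norm (\<xi> t) + \<gamma> t * norm (w t) \<le> De * real t powr (\<epsilon> - 1/2)"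
      using ax axi gw by linarith
    note bound = this
    have eqc: "1 - \<beta> t * \<mu> / 4 = 1 - (\<mu> * cb / 4) * real t powr (-tb)" unfolding beq by simp
    have se': "norm (Pr (x (Suc t))) \<le> (1 - (\<mu> * cb / 4) * real t powr (-tb)) * norm (Pr (x t)) + (\<alpha> t * (K * norm (x t) + G0) + \<alpha> t * norm (\<xi> t) + \<gamma> t * norm (w t))"
      using se unfolding eqc G0_def[symmetric] by linarith
    have eqp: "real t powr (-(1/2 - \<epsilon>)) = real t powr (\<epsilon> - 1/2)" by simp
    show ?thesis unfolding eqp using se' bound by linarith
  qed
  show ?thesis
    by (rule contraction[of T0 "\<lambda>t. norm (Pr (x t))" "\<mu> * cb / 4" tb De "1/2 - \<epsilon>" \<tau>, OF estep])
       (use mu cb De0 tb tau e in auto)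
qed

lemma vec_nth_meas: "(\<lambda>z::'a::real_normed_vector^'n. z $ n) \<in> borel_measurable borel"
  by (rule borel_measurable_continuous_onI) (intro continuous_on_component continuous_on_id)


theorem lemma3:
  fixes U :: "'n::finite \<Rightarrow> real^'d \<Rightarrow> real"
    and g :: "'n \<Rightarrow> real^'d \<Rightarrow> real^'d"
    and H :: "'n \<Rightarrow> real^'d \<Rightarrow> ((real^'d) \<Rightarrow>\<^sub>L (real^'d))"
    and K C1 B c\<^sub>\<alpha> c\<^sub>\<beta> c\<^sub>\<gamma> \<tau>\<^sub>\<beta> :: real
    and E :: "'n \<Rightarrow> 'n \<Rightarrow> bool"
    and M :: "'a measure"
    and x \<xi> w :: "nat \<Rightarrow> 'a \<Rightarrow> real^'d^'n"
    and x0 :: "real^'d^'n"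
    and \<alpha> \<beta> \<gamma> :: "nat \<Rightarrow> real"
  defines "Ubar \<equiv> (\<lambda>y. \<Sum>n\<in>UNIV. U n y)"
    and "G \<equiv> (\<lambda>y. \<Sum>n\<in>UNIV. g n y)"
    and "F \<equiv> nat_filtration M x \<xi> w"
  assumes A1_K: "K > 0"
    and A1_grad: "\<And>n y. GDERIV (U n) y :> g n y"
    and A1_hess: "\<And>n y. (g n has_derivative blinfun_apply (H n y)) (at y)"
    and A1_C2: "\<And>n. continuous_on UNIV (H n)"
    and A1_lip: "\<And>n. K-lipschitz_on UNIV (g n)"
    and A2_coercive: "\<And>n. filterlim (U n) at_top at_infinity"
    and A2_C1: "C1 > 0"
    and A2_inner: "\<And>n y. norm y \<ge> C1 \<Longrightarrow> inner y (g n y) \<ge> 0"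
    and A3_min: "(\<exists>y. Ubar y = 0) \<and> (\<forall>y. Ubar y \<ge> 0)"
    and A3_inf: "\<exists>c. \<forall>y. (norm (G y))\<^sup>2 - (\<Sum>n\<in>UNIV. trace_hessian (H n) y) \<ge> c"
    and A4: "\<exists>\<mu>. weak_limit_at_zero (gibbs_measure Ubar) \<mu>"
    and A5_angle: "Liminf at_infinity
        (\<lambda>y. ereal (inner ((1 / norm (G y)) *\<^sub>R G y) ((1 / norm y) *\<^sub>R y)))
        \<ge> ereal (sqrt ((4 * real CARD('d) - 4) / (4 * real CARD('d) - 3)))"
    and A5_lower: "Liminf at_infinity (\<lambda>y. ereal (norm (G y) / norm y)) > 0"
    and A5_upper: "Limsup at_infinity (\<lambda>y. ereal (norm (G y) / norm y)) < \<infinity>"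
    and G_undirected: "undirected_graph E"
    and G_connected: "connected_graph E"
    and prob: "prob_space M"
    and x_meas: "\<And>t. x t \<in> borel_measurable M"
    and xi_meas: "\<And>t. \<xi> t \<in> borel_measurable M"
    and w_meas: "\<And>t. w t \<in> borel_measurable M"
    and x_init: "\<And>\<omega>. \<omega> \<in> space M \<Longrightarrow> x 0 \<omega> = x0"
    and recursion: "\<And>t \<omega>. \<omega> \<in> space M \<Longrightarrow>
        x (Suc t) \<omega> = x t \<omega> - \<beta> t *\<^sub>R kron_laplacian (graph_laplacian E) (x t \<omega>)
          - \<alpha> t *\<^sub>R ((\<chi> n. g n (x t \<omega> $ n)) + \<xi> t \<omega>) + \<gamma> t *\<^sub>R w t \<omega>"
    and A6_adapted: "\<And>t. \<xi> t \<in> borel_measurable (F (Suc t))"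
    and A6_mean: "\<And>t n i. AE \<omega> in M. real_cond_exp M (F t) (\<lambda>\<omega>. \<xi> t \<omega> $ n $ i) \<omega> = 0"
    and A6_B: "B > 0"
    and A6_var: "\<And>t. AE \<omega> in M.
        nn_cond_exp M (F t) (\<lambda>\<omega>. ennreal ((norm (\<xi> t \<omega>))\<^sup>2)) \<omega> < ennreal B"
    and A7_gauss: "\<And>t n. distr M borel (\<lambda>\<omega>. w t \<omega> $ n) = std_gaussian"
    and A7_iid: "\<And>n. prob_space.indep_vars M (\<lambda>_. borel) (\<lambda>t \<omega>. w t \<omega> $ n) UNIV"
    and A7_indep_nodes: "prob_space.indep_vars M (\<lambda>_. Pi\<^sub>M UNIV (\<lambda>_. borel))
        (\<lambda>n \<omega> t. w t \<omega> $ n) UNIV"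
    and A7_indep_past: "\<And>t n. prob_space.indep_set M (sets (F t)) (gen_sets M (\<lambda>\<omega>. w t \<omega> $ n))"
    and A8_c: "c\<^sub>\<alpha> > 0" "c\<^sub>\<beta> > 0" "c\<^sub>\<gamma> > 0"
    and A8_tau: "0 < \<tau>\<^sub>\<beta>" "\<tau>\<^sub>\<beta> < 1/2"
    and A8_steps: "eventually (\<lambda>t. \<alpha> t = c\<^sub>\<alpha> / real t \<and> \<beta> t = c\<^sub>\<beta> / real t powr \<tau>\<^sub>\<beta>
        \<and> \<gamma> t = c\<^sub>\<gamma> / (sqrt (real t) * sqrt (ln (ln (real t))))) sequentially"
  shows "AE \<omega> in M. \<forall>\<tau>. 0 \<le> \<tau> \<and> \<tau> < 1/2 - \<tau>\<^sub>\<beta> \<longrightarrow>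
     (\<forall>n. ((\<lambda>t. real t powr \<tau> *
        norm (x t \<omega> $ n - (1 / real CARD('n)) *\<^sub>R (\<Sum>m\<in>UNIV. x t \<omega> $ m))) \<longlonglongrightarrow> 0))"
  proof -
  interpret P: prob_space M by (rule prob)
  have [measurable]: "x t \<in> borel_measurable M" "\<xi> t \<in> borel_measurable M" "w t \<in> borel_measurable M" for t
    using x_meas xi_meas w_meas by auto
  have gen: "gen_sets M X \<subseteq> sets M" if "X \<in> borel_measurable M" for X :: "'a \<Rightarrow> real^'d^'n"
    using that unfolding gen_sets_def by (auto intro: measurable_sets)
  have subalg: "subalgebra M (F t)" for t
  proof -
    define Gs where "Gs = (\<Union>s\<in>{..t}. gen_sets M (x s)) \<union> (\<Union>s\<in>{..<t}. gen_sets M (\<xi> s) \<union> gen_sets M (w s))"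
    have GsM: "Gs \<subseteq> sets M" unfolding Gs_def using gen[OF x_meas] gen[OF xi_meas] gen[OF w_meas] by blast
    have GsP: "Gs \<subseteq> Pow (space M)" using GsM sets.sets_into_space by auto
    have Ft: "F t = sigma (space M) Gs" unfolding F_def nat_filtration_def Gs_def ..
    show ?thesis unfolding subalgebra_def Ft
      using GsP GsM by (simp add: space_measure_of sets_measure_of sets.sigma_sets_subset)
  qed
  have mom: "(\<integral>\<^sup>+\<omega>. ennreal ((norm (\<xi> t \<omega>))\<^sup>2) \<partial>M) \<le> ennreal B" for t
  proof -
    have fms: "finite_measure_subalgebra M (F t)"
      unfolding finite_measure_subalgebra_def finite_measure_subalgebra_axioms_def
      using P.finite_measure_axioms subalg by auto
    interpret S: sigma_finite_subalgebra M "F t" by (rule finite_measure_subalgebra_is_sigma_finite[OF fms])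
    have meas: "(\<lambda>\<omega>. ennreal ((norm (\<xi> t \<omega>))\<^sup>2)) \<in> borel_measurable M" by measurable
    have "(\<integral>\<^sup>+\<omega>. (\<lambda>_. 1) \<omega> * nn_cond_exp M (F t) (\<lambda>\<omega>. ennreal ((norm (\<xi> t \<omega>))\<^sup>2)) \<omega> \<partial>M)
        = (\<integral>\<^sup>+\<omega>. (\<lambda>_. 1) \<omega> * ennreal ((norm (\<xi> t \<omega>))\<^sup>2) \<partial>M)"
      by (rule S.nn_cond_exp_intg) (auto simp: meas)
    then have "(\<integral>\<^sup>+\<omega>. ennreal ((norm (\<xi> t \<omega>))\<^sup>2) \<partial>M) = (\<integral>\<^sup>+\<omega>. nn_cond_exp M (F t) (\<lambda>\<omega>. ennreal ((norm (\<xi> t \<omega>))\<^sup>2)) \<omega> \<partial>M)"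
      by simp
    also have "\<dots> \<le> (\<integral>\<^sup>+\<omega>. ennreal B \<partial>M)"
    proof (rule nn_integral_mono_AE)
      show "AE \<omega> in M. nn_cond_exp M (F t) (\<lambda>\<omega>. ennreal ((norm (\<xi> t \<omega>))\<^sup>2)) \<omega> \<le> ennreal B"
        using A6_var[of t] by (rule AE_mp) (intro AE_I2 impI less_imp_le)
    qed
    also have "\<dots> = ennreal B" by (simp add: P.emeasure_space_1)
    finally show ?thesis .
  qed
  have AExi: "AE \<omega> in M. \<forall>k::nat. eventually (\<lambda>t. norm (\<xi> t \<omega>) \<le> real t powr (1/2 + 1 / real (Suc k))) sequentially"
    unfolding AE_all_countable
  proof
    fix k :: nat
    show "AE \<omega> in M. eventually (\<lambda>t. norm (\<xi> t \<omega>) \<le> real t powr (1/2 + 1 / real (Suc k))) sequentially"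
      by (rule xi_bound[OF prob, of "\<lambda>t \<omega>. norm (\<xi> t \<omega>)" B]) (auto simp: mom)
  qed
  define Cg where "Cg = enn2real (\<integral>\<^sup>+y. ennreal (exp (norm y)) \<partial>(std_gaussian :: (real^'d) measure))"
  have gfin: "(\<integral>\<^sup>+y. ennreal (exp (norm y)) \<partial>(std_gaussian :: (real^'d) measure)) = ennreal Cg"
  proof -
    have "(\<integral>\<^sup>+y. ennreal (exp (norm y)) \<partial>(std_gaussian :: (real^'d) measure)) < top"
      using gauss_exp_finite unfolding infinity_ennreal_def .
    then show ?thesis unfolding Cg_def by (rule ennreal_enn2real[symmetric])
  qed
  have wmom: "(\<integral>\<^sup>+\<omega>. ennreal (exp (norm (w t \<omega> $ n))) \<partial>M) \<le> ennreal Cg" for t n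
  proof -
    have wm: "(\<lambda>\<omega>. w t \<omega> $ n) \<in> borel_measurable M"
      using measurable_compose[OF w_meas[of t] vec_nth_meas] by simp
    have "(\<integral>\<^sup>+\<omega>. ennreal (exp (norm (w t \<omega> $ n))) \<partial>M) = (\<integral>\<^sup>+y. ennreal (exp (norm y)) \<partial>distr M borel (\<lambda>\<omega>. w t \<omega> $ n))"
      by (rule nn_integral_distr[symmetric]) (auto simp: wm)
    also have "\<dots> = ennreal Cg" unfolding A7_gauss gfin ..
    finally show ?thesis by simp
  qed
  have AEw: "AE \<omega> in M. \<forall>n\<in>UNIV. eventually (\<lambda>t. norm (w t \<omega> $ n) \<le> 2 * ln (real t)) sequentially"
  proof (rule AE_finite_allI)
    fix n :: 'n
    have wm: "(\<lambda>\<omega>. w t \<omega> $ n) \<in> borel_measurable M" for t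
      using measurable_compose[OF w_meas[of t] vec_nth_meas] by simp
    show "AE \<omega> in M. eventually (\<lambda>t. norm (w t \<omega> $ n) \<le> 2 * ln (real t)) sequentially"
      by (rule exp_bound[OF prob, of "\<lambda>t \<omega>. norm (w t \<omega> $ n)" Cg]) (use wm wmom in auto)
  qed simp
  show ?thesis
    using AExi AEw AE_space
  proof (eventually_elim)
    case (elim \<omega>)
    note xiw = elim(1) and ww = elim(2)
    show ?case
    proof (intro allI impI)
      fix \<tau> :: real and n :: 'n
      assume tau: "0 \<le> \<tau> \<and> \<tau> < 1/2 - \<tau>\<^sub>\<beta>"
      obtain k where k: "inverse (real (Suc k)) < 1/2 - \<tau>\<^sub>\<beta> - \<tau>"
        using reals_Archimedean[of "1/2 - \<tau>\<^sub>\<beta> - \<tau>"] tau by auto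
      define \<epsilon> where "\<epsilon> = 1 / real (Suc k)"
      have e: "0 < \<epsilon>" unfolding \<epsilon>_def by simp
      have tau2: "\<tau> < 1/2 - \<tau>\<^sub>\<beta> - \<epsilon>" using k unfolding \<epsilon>_def by (simp add: inverse_eq_divide)
      have xib: "eventually (\<lambda>t. norm (\<xi> t \<omega>) \<le> real t powr (1/2 + \<epsilon>)) sequentially"
        using xiw unfolding \<epsilon>_def by blast
      have wb: "eventually (\<lambda>t. norm (w t \<omega>) \<le> (2 * real CARD('n)) * ln (real t)) sequentially"
      proof -
        have "eventually (\<lambda>t. \<forall>n. norm (w t \<omega> $ n) \<le> 2 * ln (real t)) sequentially"
          using ww by (intro eventually_all_finite) auto
        then show ?thesis
        proof eventually_elim
          case (elim t)
          have "norm (w t \<omega>) \<le> (\<Sum>n\<in>UNIV. norm (w t \<omega> $ n))"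
            unfolding norm_vec_def by (rule L2_set_le_sum) simp
          also have "\<dots> \<le> (\<Sum>n\<in>(UNIV::'n set). 2 * ln (real t))" using elim by (intro sum_mono) auto
          also have "\<dots> = (2 * real CARD('n)) * ln (real t)" by simp
          finally show ?case .
        qed
      qed
      have rec': "\<And>t. x (Suc t) \<omega> = x t \<omega> - \<beta> t *\<^sub>R LK E (x t \<omega>) - \<alpha> t *\<^sub>R (ghat g (x t \<omega>) + \<xi> t \<omega>) + \<gamma> t *\<^sub>R w t \<omega>"
        using recursion[OF elim(3)] unfolding ghat_def by simp
      have lim: "(\<lambda>t. real t powr \<tau> * norm (Pr (x t \<omega>))) \<longlonglongrightarrow> 0"
        by (rule det_main[OF G_undirected G_connected _ A1_lip _ A2_inner rec' A8_c A8_tau A8_steps e _ tau2 xib wb])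
           (use A1_K A2_C1 tau in auto)
      show "(\<lambda>t. real t powr \<tau> * norm (x t \<omega> $ n - (1 / real CARD('n)) *\<^sub>R (\<Sum>m\<in>UNIV. x t \<omega> $ m))) \<longlonglongrightarrow> 0"
      proof (rule Lim_null_comparison[OF _ lim])
        show "eventually (\<lambda>t. norm (real t powr \<tau> * norm (x t \<omega> $ n - (1 / real CARD('n)) *\<^sub>R (\<Sum>m\<in>UNIV. x t \<omega> $ m)))
            \<le> real t powr \<tau> * norm (Pr (x t \<omega>))) sequentially"
        proof (intro always_eventually allI)
          fix t
          have "norm (x t \<omega> $ n - (1 / real CARD('n)) *\<^sub>R (\<Sum>m\<in>UNIV. x t \<omega> $ m)) = norm (Pr (x t \<omega>) $ n)"
            by (simp add: Pr_def avgv_def)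
          also have "\<dots> \<le> norm (Pr (x t \<omega>))" by (rule Finite_Cartesian_Product.norm_nth_le)
          finally show "norm (real t powr \<tau> * norm (x t \<omega> $ n - (1 / real CARD('n)) *\<^sub>R (\<Sum>m\<in>UNIV. x t \<omega> $ m)))
            \<le> real t powr \<tau> * norm (Pr (x t \<omega>))"
            by (simp add: mult_left_mono)
        qed
      qed
    qed
  qed
qed

end
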